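(* Let $s\geq1$, let $q$ be a prime power and let $C^{(1)},\ldots,C^{(s)}\in\mathbb{F}_q^{\mathbb{N}\times\mathbb{N}_0}$ be finite-row generating matrices having optimal row-lengths and yielding, via Algorithm 1 (for some admissible choice of the bijections), a $(\mathbf{T},s)$-sequence in base $q$ with $\mathbf{T}\equiv 0$. Let $(s_n)_{n\geq0}$ be a sequence in $\mathbb{Z}_q$. Then, for any choice of bijections $\psi_r$, $\lambda_{i,j}$, the sequence produced by Algorithm 2 with these matrices and input $(s_n)_{n\ge0}$ is uniformly distributed in $[0,1]^s$ if and only if $(s_n)_{n\geq0}$ is uniformly distributed in $\mathbb{Z}_q$.
   Context: $\mathbb{F}_q$ is the finite field with $q$ elements, $D_q=\{0,\ldots,q-1\}$. $\mathbb{Z}_q$ is the ring of $q$-adic integers; each $z\in\mathbb{Z}_q$ has a unique representation $z=\sum_{r\ge0}a_rq^r$, $a_r\in D_q$ (the base-$q$ expansion for nonnegative integers), and $\tau_k(z)=\sum_{r<k}a_rq^r$. $(x_n)$ in $\mathbb{Z}_q$ is uniformly distributed in $\mathbb{Z}_q$ if for all $k\ge1$ and $0\le a<q^k$, $\frac1N\#\{n<N:\tau_k(x_n)\equiv a\bmod q^k\}\to q^{-k}$. A matrix $C^{(i)}=(c^{(i)}_{j,r})_{j\ge1,r\ge0}$ is finite-row if each row has finitely many nonzero entries. The length of row $j$ of $C^{(i)}$ is $\sup\{r:c^{(i)}_{j,r}\neq0\}+1$; the matrices have optimal row-lengths if for all $i\in\{1,\ldots,s\}$ and $j\ge1$ the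 length of row $j$ of $C^{(i)}$ is at most $sj$. Algorithm 2: choose bijections $\psi_r:D_q\to\mathbb{F}_q$ ($r\ge0$), finite-row matrices $C^{(i)}$, bijections $\lambda_{i,j}:\mathbb{F}_q\to D_q$, and $(s_n)$ in $\mathbb{Z}_q$; with $s_n=\sum_r a_rq^r$ put $x_n^{(i)}=\sum_{j\ge1}\lambda_{i,j}(\sum_r c^{(i)}_{j,r}\psi_r(a_r))q^{-j}$, $\boldsymbol{x}_n=(x_n^{(1)},\dots,x_n^{(s)})$. Algorithm 1 is the same with $s_n=n$ and $\psi_r(0)=0$ for all large $r$. The truncation $[x_n^{(i)}]_{q,m}$ is $\sum_{j=1}^m\lambda_{i,j}(\cdots)q^{-j}$ (truncation of this digit expansion), applied coordinatewise to vectors. An elementary interval in base $q$ is $\prod_{i=1}^s[a_iq^{-d_i},(a_i+1)q^{-d_i})$ with integers $d_i\ge0$, $0\le a_i<q^{d_i}$. For integers $0\le t\le m$, a $(t,m,s)$-net in base $q$ is a set of $q^m$ points in $[0,1)^s$ such that every elementary interval of volume $q^{t-m}$ contains exactly $q^t$ of them. For $\mathbf{T}:\mathbb{N}_0\to\mathbb{N}_0$ with $\mathbf{T}(m)\le m$, a sequence $(\boldsymbol{x}_n)$ in $[0,1]^s$ is a $(\mathbf{T},s)$-sequence in base $q$ if for all $k\ge0$ and all $m$ with $\mathbf{T}(m)<m$ the points $[\boldsymbol{x}_n]_{q,m}$, $kq^m\le n<(k+1)q^m$, form a $(\mathbf{T}(m),m,s)$-net in base $q$. A sequence in $[0,1]^s$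 is uniformly distributed if the star discrepancy $\sup_J|A(J)/N-\mathrm{vol}(J)|$ of its first $N$ terms (sup over subintervals $J\subseteq[0,1]^s$ with a vertex at the origin, $A(J)=\#\{n<N:\boldsymbol{x}_n\in J\}$) tends to $0$. *)

theory Defs
  imports "HOL-Analysis.Analysis"
begin

text \<open>q-adic integers are represented by their (unique) digit sequences
  a :: nat \<Rightarrow> nat with a r < q for all r.\<close>

definition qdigits :: "nat \<Rightarrow> nat \<Rightarrow> nat \<Rightarrow> nat" where
  "qdigits q n r = (n div q ^ r) mod q"

definition qadic_trunc :: "nat \<Rightarrow> nat \<Rightarrow> (nat \<Rightarrow> nat) \<Rightarrow> nat" where
  "qadic_trunc q k a = (\<Sum>r<k. a r * q ^ r)"

definition qadic_ud :: "nat \<Rightarrow> (nat \<Rightarrow> nat \<Rightarrow> nat) \<Rightarrow> bool" where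
  "qadic_ud q x \<longleftrightarrow> (\<forall>k\<ge>1. \<forall>a<q ^ k.
     (\<lambda>N. real (card {n. n < N \<and> qadic_trunc q k (x n) mod q ^ k = a mod q ^ k}) / real N)
       \<longlonglongrightarrow> 1 / real q ^ k)"

text \<open>Generating matrices: C i j r = c^{(i)}_{j,r}, i \<in> {1..s}, j \<ge> 1, r \<ge> 0.\<close>

definition finite_row :: "nat \<Rightarrow> (nat \<Rightarrow> nat \<Rightarrow> nat \<Rightarrow> 'a::zero) \<Rightarrow> bool" where
  "finite_row s C \<longleftrightarrow> (\<forall>i\<in>{1..s}. \<forall>j\<ge>1. finite {r. C i j r \<noteq> 0})"

definition optimal_row_lengths :: "nat \<Rightarrow> (nat \<Rightarrow> nat \<Rightarrow> nat \<Rightarrow> 'a::zero) \<Rightarrow> bool" where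
  "optimal_row_lengths s C \<longleftrightarrow>
     (\<forall>i\<in>{1..s}. \<forall>j\<ge>1. \<forall>r. C i j r \<noteq> 0 \<longrightarrow> r + 1 \<le> s * j)"

definition alg_digit ::
  "(nat \<Rightarrow> nat \<Rightarrow> nat \<Rightarrow> 'a::field) \<Rightarrow> (nat \<Rightarrow> nat \<Rightarrow> 'a) \<Rightarrow> (nat \<Rightarrow> nat \<Rightarrow> 'a \<Rightarrow> nat)
     \<Rightarrow> (nat \<Rightarrow> nat) \<Rightarrow> nat \<Rightarrow> nat \<Rightarrow> nat" where
  "alg_digit C \<psi> lam a i j = lam i j (\<Sum>r\<in>{r. C i j r \<noteq> 0}. C i j r * \<psi> r (a r))"

definition alg_point ::
  "nat \<Rightarrow> (nat \<Rightarrow> nat \<Rightarrow> nat \<Rightarrow> 'a::field) \<Rightarrow> (nat \<Rightarrow> nat \<Rightarrow> 'a) \<Rightarrow> (nat \<Rightarrow> nat \<Rightarrow> 'a \<Rightarrow> nat)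
     \<Rightarrow> (nat \<Rightarrow> nat) \<Rightarrow> nat \<Rightarrow> real" where
  "alg_point q C \<psi> lam a i = (\<Sum>j. real (alg_digit C \<psi> lam a i (Suc j)) / real q ^ Suc j)"

definition alg_trunc ::
  "nat \<Rightarrow> (nat \<Rightarrow> nat \<Rightarrow> nat \<Rightarrow> 'a::field) \<Rightarrow> (nat \<Rightarrow> nat \<Rightarrow> 'a) \<Rightarrow> (nat \<Rightarrow> nat \<Rightarrow> 'a \<Rightarrow> nat)
     \<Rightarrow> nat \<Rightarrow> (nat \<Rightarrow> nat) \<Rightarrow> nat \<Rightarrow> real" where
  "alg_trunc q C \<psi> lam m a i = (\<Sum>j\<in>{1..m}. real (alg_digit C \<psi> lam a i j) / real q ^ j)"

definition psi_bij :: "nat \<Rightarrow> (nat \<Rightarrow> nat \<Rightarrow> 'a) \<Rightarrow> bool" where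
  "psi_bij q \<psi> \<longleftrightarrow> (\<forall>r. bij_betw (\<psi> r) {..<q} UNIV)"

definition lambda_bij :: "nat \<Rightarrow> nat \<Rightarrow> (nat \<Rightarrow> nat \<Rightarrow> 'a \<Rightarrow> nat) \<Rightarrow> bool" where
  "lambda_bij q s lam \<longleftrightarrow> (\<forall>i\<in>{1..s}. \<forall>j\<ge>1. bij_betw (lam i j) UNIV {..<q})"

definition in_elem_interval ::
  "nat \<Rightarrow> nat \<Rightarrow> (nat \<Rightarrow> nat) \<Rightarrow> (nat \<Rightarrow> nat) \<Rightarrow> (nat \<Rightarrow> real) \<Rightarrow> bool" where
  "in_elem_interval q s d a x \<longleftrightarrow>
     (\<forall>i\<in>{1..s}. real (a i) / real q ^ d i \<le> x i \<and> x i < real (a i + 1) / real q ^ d i)"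

definition is_tms_net :: "nat \<Rightarrow> nat \<Rightarrow> nat \<Rightarrow> nat \<Rightarrow> (nat \<Rightarrow> nat \<Rightarrow> real) \<Rightarrow> bool" where
  "is_tms_net q t m s P \<longleftrightarrow> t \<le> m \<and>
     (\<forall>n<q ^ m. \<forall>i\<in>{1..s}. 0 \<le> P n i \<and> P n i < 1) \<and>
     (\<forall>d a. (\<Sum>i\<in>{1..s}. d i) = m - t \<longrightarrow> (\<forall>i\<in>{1..s}. a i < q ^ d i) \<longrightarrow>
        card {n. n < q ^ m \<and> in_elem_interval q s d a (P n)} = q ^ t)"

text \<open>(T,s)-sequence in base q; tr m n is the truncation [x_n]_{q,m}.\<close>
definition is_Ts_sequence ::
  "nat \<Rightarrow> (nat \<Rightarrow> nat) \<Rightarrow> nat \<Rightarrow> (nat \<Rightarrow> nat \<Rightarrow> real) \<Rightarrow> (nat \<Rightarrow> nat \<Rightarrow> nat \<Rightarrow> real) \<Rightarrow> bool" where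
  "is_Ts_sequence q T s x tr \<longleftrightarrow>
     (\<forall>m. T m \<le> m) \<and> (\<forall>n. \<forall>i\<in>{1..s}. 0 \<le> x n i \<and> x n i \<le> 1) \<and>
     (\<forall>k m. T m < m \<longrightarrow> is_tms_net q (T m) m s (\<lambda>n. tr m (k * q ^ m + n)))"

definition star_discrepancy :: "nat \<Rightarrow> (nat \<Rightarrow> nat \<Rightarrow> real) \<Rightarrow> nat \<Rightarrow> real" where
  "star_discrepancy s x N = (SUP b\<in>{b. \<forall>i\<in>{1..s}. 0 \<le> b i \<and> b i \<le> 1}.
     \<bar>real (card {n. n < N \<and> (\<forall>i\<in>{1..s}. x n i < b i)}) / real N - (\<Prod>i\<in>{1..s}. b i)\<bar>)"

definition unif_distr :: "nat \<Rightarrow> (nat \<Rightarrow> nat \<Rightarrow> real) \<Rightarrow> bool" where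
  "unif_distr s x \<longleftrightarrow> (\<lambda>N. star_discrepancy s x N) \<longlonglongrightarrow> 0"

end

theory Submission
  imports Defs
begin



lemma trunc_shift: "qadic_trunc q (Suc m) a = a 0 + q * qadic_trunc q m (\<lambda>r. a (Suc r))"
  unfolding qadic_trunc_def by (subst sum.lessThan_Suc_shift) (simp add: sum_distrib_left mult_ac)

lemma trunc_lt: "0 < q \<Longrightarrow> (\<forall>r<m. a r < q) \<Longrightarrow> qadic_trunc q m a < q ^ m"
proof (induction m arbitrary: a)
  case 0 then show ?case by (simp add: qadic_trunc_def)
next
  case (Suc m)
  have h1: "qadic_trunc q m (\<lambda>r. a (Suc r)) < q ^ m" using Suc by auto
  have h2: "a 0 < q" using Suc by auto
  have "a 0 + q * qadic_trunc q m (\<lambda>r. a (Suc r)) < q + q * qadic_trunc q m (\<lambda>r. a (Suc r))"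
    using h2 by simp
  also have "\<dots> = q * (qadic_trunc q m (\<lambda>r. a (Suc r)) + 1)" by (simp add: algebra_simps)
  also have "\<dots> \<le> q * q ^ m" using h1 by (intro mult_le_mono2) simp
  finally show ?case by (simp add: trunc_shift)
qed

lemma trunc_digit: "0 < q \<Longrightarrow> (\<forall>r<m. a r < q) \<Longrightarrow> t < m \<Longrightarrow> qadic_trunc q m a div q ^ t mod q = a t"
proof (induction m arbitrary: a t)
  case 0 then show ?case by simp
next
  case (Suc m)
  show ?case
  proof (cases t)
    case 0 then show ?thesis using Suc.prems by (simp add: trunc_shift)
  next
    case (Suc t')
    have "qadic_trunc q (Suc m) a div q ^ t = (qadic_trunc q (Suc m) a div q) div q ^ t'"
      using Suc by (simp add: div_mult2_eq)
    also have "qadic_trunc q (Suc m) a div q = qadic_trunc q m (\<lambda>r. a (Suc r))"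
      using Suc.prems by (simp add: trunc_shift)
    finally show ?thesis using Suc.IH[of "\<lambda>r. a (Suc r)" t'] Suc.prems Suc by auto
  qed
qed

lemma trunc_cong: "(\<forall>r<m. a r = b r) \<Longrightarrow> qadic_trunc q m a = qadic_trunc q m b"
  unfolding qadic_trunc_def by (intro sum.cong) auto

lemma trunc_bij: "0 < q \<Longrightarrow> bij_betw (qadic_trunc q m) (PiE {..<m} (\<lambda>_. {..<q})) {..<q^m}"
proof -
  assume q: "0 < q"
  let ?A = "PiE {..<m} (\<lambda>_. {..<q})"
  have inj: "inj_on (qadic_trunc q m) ?A"
  proof (rule inj_onI)
    fix a b assume a: "a \<in> ?A" and b: "b \<in> ?A" and e: "qadic_trunc q m a = qadic_trunc q m b"
    have "\<forall>t\<in>{..<m}. a t = b t"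
    proof
      fix t assume t: "t \<in> {..<m}"
      have "a t = qadic_trunc q m a div q ^ t mod q" using trunc_digit[of q m a t] q a t by (auto simp: PiE_iff)
      also have "\<dots> = b t" using e trunc_digit[of q m b t] q b t by (auto simp: PiE_iff)
      finally show "a t = b t" .
    qed
    then show "a = b" using a b by (intro PiE_ext) auto
  qed
  have sub: "qadic_trunc q m ` ?A \<subseteq> {..<q^m}" using trunc_lt[OF q] by (auto simp: PiE_iff)
  have "card (qadic_trunc q m ` ?A) = card {..<q^m}"
    using card_image[OF inj] by (simp add: card_PiE)
  then have "qadic_trunc q m ` ?A = {..<q^m}" using sub by (intro card_subset_eq) auto
  then show ?thesis using inj by (simp add: bij_betw_def)
qed

lemma trunc_split: "K \<le> m \<Longrightarrow> qadic_trunc q m a = qadic_trunc q K a + q ^ K * (\<Sum>r\<in>{K..<m}. a r * q ^ (r - K))"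
proof -
  assume K: "K \<le> m"
  have "qadic_trunc q m a = (\<Sum>r\<in>{0..<K}. a r * q ^ r) + (\<Sum>r\<in>{K..<m}. a r * q ^ r)"
    unfolding qadic_trunc_def using K by (simp add: atLeast0LessThan[symmetric] sum.atLeastLessThan_concat)
  also have "(\<Sum>r\<in>{K..<m}. a r * q ^ r) = q ^ K * (\<Sum>r\<in>{K..<m}. a r * q ^ (r - K))"
    unfolding sum_distrib_left
    by (intro sum.cong refl) (simp add: power_add[symmetric] mult_ac)
  finally show ?thesis by (simp add: qadic_trunc_def atLeast0LessThan)
qed

lemma trunc_mod: "0 < q \<Longrightarrow> K \<le> m \<Longrightarrow> (\<forall>r<m. a r < q) \<Longrightarrow> qadic_trunc q K a = qadic_trunc q m a mod q ^ K"
  using trunc_split[of K m q a] trunc_lt[of q K a] by simp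




definition cell :: "nat \<Rightarrow> nat \<Rightarrow> (nat \<Rightarrow> nat) \<Rightarrow> nat" where
  "cell q k d = (\<Sum>j\<in>{1..k}. d j * q ^ (k - j))"

lemma cell_trunc: "cell q k d = qadic_trunc q k (\<lambda>r. d (k - r))"
  unfolding cell_def qadic_trunc_def
  by (rule sum.reindex_bij_witness[of _ "\<lambda>r. k - r" "\<lambda>j. k - j"]) auto

lemma cell_cong: "(\<forall>j\<in>{1..k}. d j = d' j) \<Longrightarrow> cell q k d = cell q k d'"
  unfolding cell_def by (intro sum.cong) auto

lemma cell_lt: "0 < q \<Longrightarrow> (\<forall>j\<in>{1..k}. d j < q) \<Longrightarrow> cell q k d < q ^ k"
  unfolding cell_trunc by (rule trunc_lt) auto

lemma cell_inj: "0 < q \<Longrightarrow> (\<forall>j\<in>{1..k}. d j < q) \<Longrightarrow> (\<forall>j\<in>{1..k}. d' j < q) \<Longrightarrow>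
   cell q k d = cell q k d' \<Longrightarrow> j \<in> {1..k} \<Longrightarrow> d j = d' j"
proof -
  assume q: "0 < q" and d: "\<forall>j\<in>{1..k}. d j < q" and d': "\<forall>j\<in>{1..k}. d' j < q"
    and e: "cell q k d = cell q k d'" and j: "j \<in> {1..k}"
  have a: "\<forall>r<k. d (k - r) < q" "\<forall>r<k. d' (k - r) < q" using d d' by auto
  have "d j = (\<lambda>r. d (k - r)) (k - j)" using j by auto
  also have "\<dots> = qadic_trunc q k (\<lambda>r. d (k - r)) div q ^ (k - j) mod q"
    using trunc_digit[OF q a(1), of "k - j"] j by auto
  also have "\<dots> = qadic_trunc q k (\<lambda>r. d' (k - r)) div q ^ (k - j) mod q"
    using e by (simp add: cell_trunc)
  also have "\<dots> = (\<lambda>r. d' (k - r)) (k - j)"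
    using trunc_digit[OF q a(2), of "k - j"] j by auto
  also have "\<dots> = d' j" using j by auto
  finally show ?thesis .
qed

lemma cell_real: "0 < q \<Longrightarrow> real (cell q k d) / real q ^ k = (\<Sum>j\<in>{1..k}. real (d j) / real q ^ j)"
  unfolding cell_def of_nat_sum sum_divide_distrib
proof (intro sum.cong refl)
  fix j assume q: "0 < q" and j: "j \<in> {1..k}"
  have "real (q ^ (k - j)) = real q ^ k / real q ^ j"
    unfolding of_nat_power using q j by (simp add: power_diff)
  then show "real (d j * q ^ (k - j)) / real q ^ k = real (d j) / real q ^ j"
    using q by (simp add: field_simps)
qed

lemma tail_bound:
  assumes q: "0 < q" and d: "\<forall>j\<ge>1. d j < q" and kM: "k \<le> M"
  shows "(\<Sum>j\<in>{k<..M}. real (d j) / real q ^ j) \<le> 1 / real q ^ k - 1 / real q ^ M"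
  using kM
proof (induction M rule: dec_induct)
  case base then show ?case by simp
next
  case (step n)
  have ins: "{k<..Suc n} = insert (Suc n) {k<..n}" using step by auto
  have "d (Suc n) < q" using d by simp
  then have dl: "real (d (Suc n)) \<le> real q - 1" by linarith
  have qp: "real q ^ n > 0" using q by simp
  have "real (d (Suc n)) / real q ^ Suc n \<le> (real q - 1) / real q ^ Suc n"
    using dl qp q by (intro divide_right_mono) auto
  also have "\<dots> = 1 / real q ^ n - 1 / real q ^ Suc n" using q qp by (simp add: field_simps)
  finally have "real (d (Suc n)) / real q ^ Suc n \<le> 1 / real q ^ n - 1 / real q ^ Suc n" .
  then show ?case unfolding ins using step by simp
qed

lemma sum_split_k: "(k::nat) \<le> M \<Longrightarrow> (\<Sum>j\<in>{1..M}. f j) = (\<Sum>j\<in>{1..k}. f j) + (\<Sum>j\<in>{k<..M}. (f j :: real))"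
proof -
  assume kM: "k \<le> M"
  have "{1..M} = {1..k} \<union> {k<..M}" using kM by auto
  moreover have "{1..k} \<inter> {k<..M} = {}" by auto
  ultimately show ?thesis by (simp add: sum.union_disjoint)
qed

lemma trunc_bounds:
  assumes q: "0 < q" and d: "\<forall>j\<ge>1. d j < q" and kM: "k \<le> M"
  shows "real (cell q k d) / real q ^ k \<le> (\<Sum>j\<in>{1..M}. real (d j) / real q ^ j)
    \<and> (\<Sum>j\<in>{1..M}. real (d j) / real q ^ j) < (real (cell q k d) + 1) / real q ^ k"
proof -
  have t0: "0 \<le> (\<Sum>j\<in>{k<..M}. real (d j) / real q ^ j)" by (intro sum_nonneg) auto
  have t1: "(\<Sum>j\<in>{k<..M}. real (d j) / real q ^ j) < 1 / real q ^ k"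
    using tail_bound[OF q d kM] q by (smt (verit) divide_pos_pos of_nat_0_less_iff zero_less_power)
  have e: "(\<Sum>j\<in>{1..M}. real (d j) / real q ^ j) = real (cell q k d) / real q ^ k + (\<Sum>j\<in>{k<..M}. real (d j) / real q ^ j)"
    using sum_split_k[OF kM] cell_real[OF q] by simp
  have "(real (cell q k d) + 1) / real q ^ k = real (cell q k d) / real q ^ k + 1 / real q ^ k"
    by (simp add: add_divide_distrib)
  then show ?thesis using e t0 t1 by linarith
qed

lemma partial_Suc: "(\<Sum>j<M. real (d (Suc j)) / real q ^ Suc j) = (\<Sum>j\<in>{1..M}. real (d j) / real q ^ j)"
proof (induction M)
  case 0 then show ?case by simp
next
  case (Suc M)
  have "{1..Suc M} = insert (Suc M) {1..M}" by auto
  then show ?case using Suc by simp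
qed

lemma cell0: "cell q 0 d = 0" by (simp add: cell_def)

lemma point_bounds:
  assumes q: "0 < q" and d: "\<forall>j\<ge>1. d j < q"
  shows "real (cell q k d) / real q ^ k \<le> (\<Sum>j. real (d (Suc j)) / real q ^ Suc j)
    \<and> (\<Sum>j. real (d (Suc j)) / real q ^ Suc j) \<le> (real (cell q k d) + 1) / real q ^ k"
proof -
  let ?f = "\<lambda>j. real (d (Suc j)) / real q ^ Suc j"
  have sm: "summable ?f"
  proof (rule summableI_nonneg_bounded[where x = 1])
    fix n
    show "(\<Sum>i<n. ?f i) \<le> 1"
      using trunc_bounds[OF q d, of 0 n] unfolding partial_Suc cell0 by simp
  qed auto
  have L: "(\<lambda>n. \<Sum>i<n. ?f i) \<longlonglongrightarrow> suminf ?f" using summable_LIMSEQ[OF sm] .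
  have "real (cell q k d) / real q ^ k \<le> suminf ?f"
  proof (rule LIMSEQ_le_const[OF L], rule exI[of _ k], intro allI impI)
    fix n assume "k \<le> n"
    then show "real (cell q k d) / real q ^ k \<le> (\<Sum>i<n. ?f i)"
      using trunc_bounds[OF q d, of k n] unfolding partial_Suc by blast
  qed
  moreover have "suminf ?f \<le> (real (cell q k d) + 1) / real q ^ k"
  proof (rule LIMSEQ_le_const2[OF L], rule exI[of _ k], intro allI impI)
    fix n assume "k \<le> n"
    then show "(\<Sum>i<n. ?f i) \<le> (real (cell q k d) + 1) / real q ^ k"
      using trunc_bounds[OF q d, of k n] unfolding partial_Suc by linarith
  qed
  ultimately show ?thesis by simp
qed




definition CV :: "nat \<Rightarrow> nat \<Rightarrow> nat \<Rightarrow> (nat \<Rightarrow> nat \<Rightarrow> nat \<Rightarrow> 'a::field) \<Rightarrow> (nat \<Rightarrow> nat \<Rightarrow> 'a)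
   \<Rightarrow> (nat \<Rightarrow> nat \<Rightarrow> 'a \<Rightarrow> nat) \<Rightarrow> (nat \<Rightarrow> nat) \<Rightarrow> nat \<Rightarrow> nat" where
  "CV q s k C \<psi> lam a = restrict (\<lambda>i. cell q k (alg_digit C \<psi> lam a i)) {1..s}"

lemma dig_local:
  assumes "optimal_row_lengths s C" "i \<in> {1..s}" "1 \<le> j" "j \<le> k" "\<forall>r<s*k. a r = b r"
  shows "alg_digit C \<psi> lam a i j = alg_digit C \<psi> lam b i j"
proof -
  have "\<forall>r\<in>{r. C i j r \<noteq> 0}. r < s * k"
  proof
    fix r assume "r \<in> {r. C i j r \<noteq> 0}"
    then have "r + 1 \<le> s * j" using assms(1-3) unfolding optimal_row_lengths_def by auto
    moreover have "s * j \<le> s * k" using assms(4) by simp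
    ultimately show "r < s * k" by linarith
  qed
  then show ?thesis unfolding alg_digit_def using assms(5) by (intro arg_cong[where f = "lam i j"] sum.cong) auto
qed

lemma CV_local:
  assumes "optimal_row_lengths s C" "\<forall>r<s*k. a r = b r"
  shows "CV q s k C \<psi> lam a = CV q s k C \<psi> lam b"
  unfolding CV_def
  by (intro restrict_ext cell_cong ballI dig_local[OF assms(1) _ _ _ assms(2)]) auto

lemma dig_lt: "lambda_bij q s lam \<Longrightarrow> i \<in> {1..s} \<Longrightarrow> 1 \<le> j \<Longrightarrow> alg_digit C \<psi> lam a i j < q"
  unfolding lambda_bij_def alg_digit_def using bij_betwE by blast

lemma CV_in: "0 < q \<Longrightarrow> lambda_bij q s lam \<Longrightarrow> CV q s k C \<psi> lam a \<in> PiE {1..s} (\<lambda>_. {..<q^k})"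
  unfolding CV_def by (auto intro!: cell_lt dig_lt)

lemma CV_app: "i \<in> {1..s} \<Longrightarrow> CV q s k C \<psi> lam a i = cell q k (alg_digit C \<psi> lam a i)"
  unfolding CV_def by simp

lemma card_B: "card (PiE {1..s} (\<lambda>_. {..<q^k})) = q ^ (s * k)"
  by (simp add: card_PiE power_mult mult.commute)

lemma card_A: "card (PiE {..<m} (\<lambda>_. {..<q})) = q ^ m"
  by (simp add: card_PiE)

lemma nat_floor_eq:
  fixes t Q :: real and a c :: nat
  assumes "Q > 0" "real a / Q \<le> t" "t < (real a + 1) / Q" "real c / Q \<le> t" "t < (real c + 1) / Q"
  shows "a = c"
proof -
  have "real a / Q < (real c + 1) / Q" using assms by linarith
  then have "real a < real c + 1" using assms(1) by (simp add: divide_less_cancel)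
  moreover have "real c / Q < (real a + 1) / Q" using assms by linarith
  then have "real c < real a + 1" using assms(1) by (simp add: divide_less_cancel)
  ultimately show ?thesis by linarith
qed

lemma net_surj:
  assumes q: "0 < q" and s: "1 \<le> s" and k: "1 \<le> k"
    and opt: "optimal_row_lengths s C"
    and lb: "lambda_bij q s lam1"
    and ts: "is_Ts_sequence q (\<lambda>_. 0) s X (\<lambda>m n. alg_trunc q C \<psi>1 lam1 m (qdigits q n))"
  shows "PiE {1..s} (\<lambda>_. {..<q^k}) \<subseteq> CV q s k C \<psi>1 lam1 ` PiE {..<s*k} (\<lambda>_. {..<q})"
proof
  fix v assume v: "v \<in> PiE {1..s} (\<lambda>_. {..<q^k})"
  let ?m = "s * k"
  have m0: "0 < ?m" using s k by simp
  have net: "is_tms_net q 0 ?m s (\<lambda>n. alg_trunc q C \<psi>1 lam1 ?m (qdigits q (0 * q ^ ?m + n)))"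
    using ts m0 unfolding is_Ts_sequence_def by blast
  have "card {n. n < q ^ ?m \<and> in_elem_interval q s (\<lambda>_. k) v (alg_trunc q C \<psi>1 lam1 ?m (qdigits q n))} = 1"
  proof -
    have "\<forall>d a. (\<Sum>i\<in>{1..s}. d i) = ?m - 0 \<longrightarrow> (\<forall>i\<in>{1..s}. a i < q ^ d i) \<longrightarrow>
        card {n. n < q ^ ?m \<and> in_elem_interval q s d a (alg_trunc q C \<psi>1 lam1 ?m (qdigits q (0 * q ^ ?m + n)))} = q ^ 0"
      using net unfolding is_tms_net_def by blast
    then have h: "(\<Sum>i\<in>{1..s}. k) = ?m - 0 \<Longrightarrow> (\<forall>i\<in>{1..s}. v i < q ^ k) \<Longrightarrow>
        card {n. n < q ^ ?m \<and> in_elem_interval q s (\<lambda>_. k) v (alg_trunc q C \<psi>1 lam1 ?m (qdigits q (0 * q ^ ?m + n)))} = q ^ 0"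
      by blast
    have "(\<Sum>i\<in>{1..s}. k) = ?m - 0" by simp
    moreover have "\<forall>i\<in>{1..s}. v i < q ^ k" using v by (simp add: PiE_iff)
    ultimately show ?thesis using h by simp
  qed
  then obtain n where n: "n < q ^ ?m" and ie: "in_elem_interval q s (\<lambda>_. k) v (alg_trunc q C \<psi>1 lam1 ?m (qdigits q n))"
    by (metis (mono_tags, lifting) One_nat_def card_1_singletonE mem_Collect_eq singletonI)
  have eqi: "CV q s k C \<psi>1 lam1 (qdigits q n) i = v i" if i: "i \<in> {1..s}" for i
  proof -
    let ?d = "alg_digit C \<psi>1 lam1 (qdigits q n) i"
    have d: "\<forall>j\<ge>1. ?d j < q" using dig_lt[OF lb i] by blast
    have km: "k \<le> ?m" using s by simp
    note tb = trunc_bounds[OF q d km]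
    have iv: "real (v i) / real q ^ k \<le> alg_trunc q C \<psi>1 lam1 ?m (qdigits q n) i"
       "alg_trunc q C \<psi>1 lam1 ?m (qdigits q n) i < (real (v i) + 1) / real q ^ k"
    proof -
      have "real (v i) / real q ^ k \<le> alg_trunc q C \<psi>1 lam1 ?m (qdigits q n) i \<and>
            alg_trunc q C \<psi>1 lam1 ?m (qdigits q n) i < real (v i + 1) / real q ^ k"
        using ie i unfolding in_elem_interval_def by blast
      then show "real (v i) / real q ^ k \<le> alg_trunc q C \<psi>1 lam1 ?m (qdigits q n) i"
       "alg_trunc q C \<psi>1 lam1 ?m (qdigits q n) i < (real (v i) + 1) / real q ^ k" by (simp_all add: add.commute)
    qed
    have "v i = cell q k ?d"
      by (rule nat_floor_eq[where Q = "real q ^ k" and t = "alg_trunc q C \<psi>1 lam1 ?m (qdigits q n) i"])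
        (use q iv tb in \<open>simp_all only: alg_trunc_def zero_less_power of_nat_0_less_iff\<close>)
    then show ?thesis using i by (simp add: CV_app)
  qed
  have "CV q s k C \<psi>1 lam1 (qdigits q n) = v"
    by (rule PiE_ext[OF CV_in[OF q lb] v]) (use eqi in auto)
  moreover have "CV q s k C \<psi>1 lam1 (qdigits q n) = CV q s k C \<psi>1 lam1 (restrict (qdigits q n) {..<?m})"
    by (rule CV_local[OF opt]) auto
  moreover have "restrict (qdigits q n) {..<?m} \<in> PiE {..<?m} (\<lambda>_. {..<q})"
    using q by (auto simp: qdigits_def)
  ultimately show "v \<in> CV q s k C \<psi>1 lam1 ` PiE {..<?m} (\<lambda>_. {..<q})" by (metis image_eqI)
qed

lemma CV1_inj:
  assumes q: "0 < q" and s: "1 \<le> s" and k: "1 \<le> k"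
    and opt: "optimal_row_lengths s C"
    and lb: "lambda_bij q s lam1"
    and ts: "is_Ts_sequence q (\<lambda>_. 0) s X (\<lambda>m n. alg_trunc q C \<psi>1 lam1 m (qdigits q n))"
  shows "inj_on (CV q s k C \<psi>1 lam1) (PiE {..<s*k} (\<lambda>_. {..<q}))"
proof (rule eq_card_imp_inj_on)
  let ?A = "PiE {..<s*k} (\<lambda>_. {..<q})" and ?B = "PiE {1..s} (\<lambda>_. {..<q^k})"
  have "CV q s k C \<psi>1 lam1 ` ?A = ?B"
  proof (rule subset_antisym)
    show "CV q s k C \<psi>1 lam1 ` ?A \<subseteq> ?B" using CV_in[OF q lb] by (intro image_subsetI)
    show "?B \<subseteq> CV q s k C \<psi>1 lam1 ` ?A" by (rule net_surj[OF assms])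
  qed
  then show "card (CV q s k C \<psi>1 lam1 ` ?A) = card ?A" by (simp only: card_B card_A)
next
  show "finite (PiE {..<s*k} (\<lambda>_. {..<q}))" by (intro finite_PiE) auto
qed




lemma rowlen: "optimal_row_lengths s C \<Longrightarrow> i \<in> {1..s} \<Longrightarrow> 1 \<le> j \<Longrightarrow> j \<le> k \<Longrightarrow> C i j r \<noteq> 0 \<Longrightarrow> r < s * k"
proof -
  assume "optimal_row_lengths s C" "i \<in> {1..s}" "1 \<le> j" "j \<le> k" "C i j r \<noteq> 0"
  then have "r + 1 \<le> s * j" "s * j \<le> s * k" unfolding optimal_row_lengths_def by auto
  then show "r < s * k" by linarith
qed

lemma CV_inj:
  assumes q: "0 < q" and opt: "optimal_row_lengths s C"
    and pb: "psi_bij q \<psi>" and lb: "lambda_bij q s lam"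
    and pb1: "psi_bij q \<psi>1" and lb1: "lambda_bij q s lam1"
    and inj1: "inj_on (CV q s k C \<psi>1 lam1) (PiE {..<s*k} (\<lambda>_. {..<q}))"
  shows "inj_on (CV q s k C \<psi> lam) (PiE {..<s*k} (\<lambda>_. {..<q}))"
proof (rule inj_onI)
  let ?A = "PiE {..<s*k} (\<lambda>_. {..<q})"
  fix a a' assume a: "a \<in> ?A" and a': "a' \<in> ?A" and e: "CV q s k C \<psi> lam a = CV q s k C \<psi> lam a'"
  have dg: "alg_digit C \<psi> lam a i j = alg_digit C \<psi> lam a' i j" if i: "i \<in> {1..s}" and j: "j \<in> {1..k}" for i j
  proof (rule cell_inj[OF q _ _ _ j])
    show "\<forall>j\<in>{1..k}. alg_digit C \<psi> lam a i j < q" using dig_lt[OF lb i] by auto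
    show "\<forall>j\<in>{1..k}. alg_digit C \<psi> lam a' i j < q" using dig_lt[OF lb i] by auto
    show "cell q k (alg_digit C \<psi> lam a i) = cell q k (alg_digit C \<psi> lam a' i)"
      using e CV_app[OF i, of q k C \<psi> lam] by metis
  qed
  have S: "(\<Sum>r\<in>{r. C i j r \<noteq> 0}. C i j r * \<psi> r (a r)) = (\<Sum>r\<in>{r. C i j r \<noteq> 0}. C i j r * \<psi> r (a' r))"
    if i: "i \<in> {1..s}" and j: "j \<in> {1..k}" for i j
  proof -
    have "bij_betw (lam i j) UNIV {..<q}" using lb i j unfolding lambda_bij_def by auto
    then have "inj (lam i j)" by (rule bij_betw_imp_inj_on)
    then show ?thesis using dg[OF i j] unfolding alg_digit_def by (auto dest: injD)
  qed
  have surj1: "\<psi>1 r ` {..<q} = UNIV" for r using pb1 unfolding psi_bij_def bij_betw_def by auto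
  have inj\<psi>: "inj_on (\<psi> r) {..<q}" for r using pb unfolding psi_bij_def bij_betw_def by auto
  define b where "b = (\<lambda>c r. if r < s * k then inv_into {..<q} (\<psi>1 r) (\<psi> r (c r)) else undefined)"
  have bA: "b c \<in> ?A" for c unfolding b_def using inv_into_into[of _ "\<psi>1 _" "{..<q}"] surj1 by (auto simp: PiE_iff extensional_def)
  have bv: "\<psi>1 r (b c r) = \<psi> r (c r)" if "r < s * k" for c r
    unfolding b_def using that f_inv_into_f[of _ "\<psi>1 r" "{..<q}"] surj1 by auto
  have S1: "(\<Sum>r\<in>{r. C i j r \<noteq> 0}. C i j r * \<psi>1 r (b c r)) = (\<Sum>r\<in>{r. C i j r \<noteq> 0}. C i j r * \<psi> r (c r))"
    if i: "i \<in> {1..s}" and j: "j \<in> {1..k}" for i j c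
    by (rule sum.cong[OF refl]) (use rowlen[OF opt i] j bv in auto)
  have "CV q s k C \<psi>1 lam1 (b a) = CV q s k C \<psi>1 lam1 (b a')"
    unfolding CV_def
  proof (intro restrict_ext cell_cong ballI)
    fix i j assume i: "i \<in> {1..s}" and j: "j \<in> {1..k}"
    show "alg_digit C \<psi>1 lam1 (b a) i j = alg_digit C \<psi>1 lam1 (b a') i j"
      unfolding alg_digit_def using S1[OF i j, of a] S1[OF i j, of a'] S[OF i j] by simp
  qed
  then have bb: "b a = b a'" using inj1 bA by (auto dest: inj_onD)
  show "a = a'"
  proof (rule PiE_ext[OF a a'])
    fix r assume r: "r \<in> {..<s*k}"
    have "\<psi> r (a r) = \<psi> r (a' r)" using bv[of r a] bv[of r a'] bb r by auto
    then show "a r = a' r" using inj\<psi>[of r] a a' r by (auto simp: PiE_iff dest: inj_onD)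
  qed
qed

lemma CV_bij:
  assumes q: "0 < q" and opt: "optimal_row_lengths s C"
    and pb: "psi_bij q \<psi>" and lb: "lambda_bij q s lam"
    and pb1: "psi_bij q \<psi>1" and lb1: "lambda_bij q s lam1"
    and inj1: "inj_on (CV q s k C \<psi>1 lam1) (PiE {..<s*k} (\<lambda>_. {..<q}))"
  shows "bij_betw (CV q s k C \<psi> lam) (PiE {..<s*k} (\<lambda>_. {..<q})) (PiE {1..s} (\<lambda>_. {..<q^k}))"
proof -
  let ?A = "PiE {..<s*k} (\<lambda>_. {..<q})" and ?B = "PiE {1..s} (\<lambda>_. {..<q^k})"
  have inj: "inj_on (CV q s k C \<psi> lam) ?A" by (rule CV_inj[OF assms])
  have sub: "CV q s k C \<psi> lam ` ?A \<subseteq> ?B" using CV_in[OF q lb] by (intro image_subsetI)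
  have "card (CV q s k C \<psi> lam ` ?A) = card ?B"
    using card_image[OF inj] by (simp only: card_A card_B)
  then have "CV q s k C \<psi> lam ` ?A = ?B" using sub by (intro card_subset_eq) (auto intro: finite_PiE)
  then show ?thesis using inj by (simp add: bij_betw_def)
qed

lemma G_exists:
  assumes q: "0 < q" and opt: "optimal_row_lengths s C"
    and bij: "bij_betw (CV q s k C \<psi> lam) (PiE {..<s*k} (\<lambda>_. {..<q})) (PiE {1..s} (\<lambda>_. {..<q^k}))"
    and sq: "\<forall>n r. sq n r < q"
  shows "\<exists>G. bij_betw G (PiE {1..s} (\<lambda>_. {..<q^k})) {..<q^(s*k)} \<and>
     (\<forall>n. qadic_trunc q (s*k) (sq n) = G (CV q s k C \<psi> lam (sq n)))"
proof -
  let ?A = "PiE {..<s*k} (\<lambda>_. {..<q})" and ?B = "PiE {1..s} (\<lambda>_. {..<q^k})"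
  let ?F = "CV q s k C \<psi> lam"
  define G where "G = qadic_trunc q (s*k) \<circ> inv_into ?A ?F"
  have "bij_betw G ?B {..<q^(s*k)}"
    unfolding G_def by (rule bij_betw_trans[OF bij_betw_inv_into[OF bij] trunc_bij[OF q]])
  moreover have "qadic_trunc q (s*k) (sq n) = G (?F (sq n))" for n
  proof -
    let ?a = "restrict (sq n) {..<s*k}"
    have aA: "?a \<in> ?A" using sq by auto
    have "?F (sq n) = ?F ?a" by (rule CV_local[OF opt]) auto
    moreover have "inv_into ?A ?F (?F ?a) = ?a"
      using bij aA by (intro inv_into_f_f) (auto simp: bij_betw_def)
    moreover have "qadic_trunc q (s*k) ?a = qadic_trunc q (s*k) (sq n)" by (rule trunc_cong) auto
    ultimately show ?thesis unfolding G_def by simp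
  qed
  ultimately show ?thesis by blast
qed




lemma prod_diff_bound:
  fixes f g :: "'b \<Rightarrow> real"
  assumes "finite I" "\<forall>i\<in>I. 0 \<le> f i \<and> f i \<le> 1 \<and> 0 \<le> g i \<and> g i \<le> 1"
  shows "\<bar>prod f I - prod g I\<bar> \<le> (\<Sum>i\<in>I. \<bar>f i - g i\<bar>)"
  using assms
proof (induction I rule: finite_induct)
  case empty then show ?case by simp
next
  case (insert a F)
  let ?P = "prod f F" and ?Q = "prod g F"
  have P: "0 \<le> ?P" "?P \<le> 1" using insert by (auto intro: prod_nonneg prod_le_1)
  have Q: "0 \<le> ?Q" "?Q \<le> 1" using insert by (auto intro: prod_nonneg prod_le_1)
  have fa: "0 \<le> f a" "f a \<le> 1" "0 \<le> g a" "g a \<le> 1" using insert by auto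
  have IH: "\<bar>?P - ?Q\<bar> \<le> (\<Sum>i\<in>F. \<bar>f i - g i\<bar>)" using insert by auto
  have e: "f a * ?P - g a * ?Q = f a * (?P - ?Q) + (f a - g a) * ?Q" by (simp add: algebra_simps)
  have "\<bar>f a * (?P - ?Q)\<bar> \<le> \<bar>?P - ?Q\<bar>" using fa by (simp add: abs_mult mult_left_le_one_le)
  moreover have "\<bar>(f a - g a) * ?Q\<bar> \<le> \<bar>f a - g a\<bar>" using Q by (simp add: abs_mult mult_right_le_one_le)
  ultimately have "\<bar>f a * ?P - g a * ?Q\<bar> \<le> \<bar>?P - ?Q\<bar> + \<bar>f a - g a\<bar>"
    unfolding e by (smt (verit) abs_triangle_ineq)
  then show ?case using insert IH by simp
qed

lemma fin_lt: "finite {n. n < (N::nat) \<and> P n}"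
  by (rule finite_subset[of _ "{..<N}"]) auto

lemma card_fib:
  assumes "finite S"
  shows "card {n. n < (N::nat) \<and> g n \<in> S} = (\<Sum>v\<in>S. card {n. n < N \<and> g n = v})"
proof -
  have "{n. n < N \<and> g n \<in> S} = (\<Union>v\<in>S. {n. n < N \<and> g n = v})" by auto
  moreover have "card (\<Union>v\<in>S. {n. n < N \<and> g n = v}) = (\<Sum>v\<in>S. card {n. n < N \<and> g n = v})"
    by (rule card_UN_disjoint[OF assms]) (auto intro: fin_lt)
  ultimately show ?thesis by simp
qed

lemma card_le_N: "card {n. n < (N::nat) \<and> P n} \<le> N"
proof -
  have "card {n. n < N \<and> P n} \<le> card {..<N}" by (intro card_mono) auto
  then show ?thesis by simp
qed

lemma cnt_ceil:
  fixes z :: real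
  assumes "z \<le> real Q"
  shows "card {c. c < Q \<and> real c < z} = nat \<lceil>z\<rceil>"
proof -
  have "{c. c < Q \<and> real c < z} = {..< nat \<lceil>z\<rceil>}"
  proof (intro set_eqI iffI)
    fix c assume "c \<in> {c. c < Q \<and> real c < z}"
    then have "int c < \<lceil>z\<rceil>" by (simp add: less_ceiling_iff)
    then show "c \<in> {..< nat \<lceil>z\<rceil>}" by simp
  next
    fix c assume "c \<in> {..< nat \<lceil>z\<rceil>}"
    then have "int c < \<lceil>z\<rceil>" by simp
    then have "real c < z" by (simp add: less_ceiling_iff)
    then show "c \<in> {c. c < Q \<and> real c < z}" using assms by simp
  qed
  then show ?thesis by simp
qed

lemma cnt_bounds:
  fixes y :: real
  assumes "0 \<le> y" "y \<le> real Q"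
  shows "\<bar>real (card {c. c < Q \<and> real c < y}) - y\<bar> \<le> 1"
    "\<bar>real (card {c. c < Q \<and> real c + 1 < y}) - y\<bar> \<le> 1"
proof -
  have a: "z \<le> real (nat \<lceil>z\<rceil>) \<and> real (nat \<lceil>z\<rceil>) \<le> max 0 z + 1" for z :: real
  proof (cases "z < 0")
    case True
    then have "\<lceil>z\<rceil> \<le> 0" by (simp add: ceiling_le_zero)
    then show ?thesis using True by simp
  next
    case False
    then show ?thesis by (simp add: ceiling_correct)
  qed
  show "\<bar>real (card {c. c < Q \<and> real c < y}) - y\<bar> \<le> 1"
  proof -
    have c: "real (nat \<lceil>y\<rceil>) = real_of_int \<lceil>y\<rceil>" using assms by simp
    show ?thesis unfolding cnt_ceil[OF assms(2)] c
      using of_int_ceiling_le_add_one[of y] le_of_int_ceiling[of y] by (simp only: abs_le_iff) linarith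
  qed
  have "{c. c < Q \<and> real c + 1 < y} = {c. c < Q \<and> real c < y - 1}" by auto
  moreover have "y - 1 \<le> real Q" using assms by simp
  ultimately show "\<bar>real (card {c. c < Q \<and> real c + 1 < y}) - y\<bar> \<le> 1"
  proof -
    have h: "y - 1 \<le> real (nat \<lceil>y - 1\<rceil>)" "real (nat \<lceil>y - 1\<rceil>) \<le> max 0 (y - 1) + 1" using a[of "y - 1"] by auto
    have "max 0 (y - 1) + 1 \<le> y + 1" using assms by (simp add: max_def)
    then show ?thesis unfolding \<open>{c. c < Q \<and> real c + 1 < y} = {c. c < Q \<and> real c < y - 1}\<close>
      cnt_ceil[OF \<open>y - 1 \<le> real Q\<close>] abs_le_iff using h by linarith
  qed
qed




lemma sum_fr_bound:
  fixes fr :: "(nat \<Rightarrow> nat) \<Rightarrow> real" and b :: "nat \<Rightarrow> real"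
  assumes q: "0 < q"
    and Sx: "\<And>i. i \<in> {1..s} \<Longrightarrow> Sx i \<subseteq> {..<q^k}"
    and Sb: "\<And>i. i \<in> {1..s} \<Longrightarrow> \<bar>real (card (Sx i)) / real q ^ k - b i\<bar> \<le> 1 / real q ^ k"
    and b: "\<And>i. i \<in> {1..s} \<Longrightarrow> 0 \<le> b i \<and> b i \<le> 1"
    and Fb: "\<And>v. v \<in> PiE {1..s} (\<lambda>_. {..<q^k}) \<Longrightarrow> \<bar>fr v - 1 / real q ^ (s*k)\<bar> \<le> \<delta>"
  shows "\<bar>(\<Sum>v\<in>PiE {1..s} Sx. fr v) - (\<Prod>i\<in>{1..s}. b i)\<bar> \<le> real (q^(s*k)) * \<delta> + real s / real q ^ k"
proof -
  let ?S = "PiE {1..s} Sx" and ?B = "PiE {1..s} (\<lambda>_. {..<q^k})"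
  have SB: "?S \<subseteq> ?B" using Sx by (force simp: PiE_iff)
  have finB: "finite ?B" by (intro finite_PiE) auto
  have finS: "finite ?S" using finite_subset[OF SB finB] .
  have d0: "0 \<le> \<delta>" using Fb[of "restrict (\<lambda>_. 0) {1..s}"] q by (auto simp: PiE_iff)
  have "\<bar>(\<Sum>v\<in>?S. fr v) - real (card ?S) / real q ^ (s*k)\<bar> = \<bar>\<Sum>v\<in>?S. (fr v - 1 / real q ^ (s*k))\<bar>"
    by (simp add: sum_subtractf)
  also have "\<dots> \<le> (\<Sum>v\<in>?S. \<bar>fr v - 1 / real q ^ (s*k)\<bar>)" by (rule sum_abs)
  also have "\<dots> \<le> (\<Sum>v\<in>?S. \<delta>)" using Fb SB by (intro sum_mono) auto
  also have "\<dots> = real (card ?S) * \<delta>" by simp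
  also have "\<dots> \<le> real (card ?B) * \<delta>" using card_mono[OF finB SB] d0 by (intro mult_right_mono) auto
  also have "\<dots> = real (q^(s*k)) * \<delta>" by (simp only: card_B)
  finally have A: "\<bar>(\<Sum>v\<in>?S. fr v) - real (card ?S) / real q ^ (s*k)\<bar> \<le> real (q^(s*k)) * \<delta>" .
  have "real (card ?S) / real q ^ (s*k) = (\<Prod>i\<in>{1..s}. real (card (Sx i))) / (\<Prod>i\<in>{1..s}. real q ^ k)"
    by (simp add: card_PiE prod_constant power_mult mult.commute)
  also have "\<dots> = (\<Prod>i\<in>{1..s}. real (card (Sx i)) / real q ^ k)" by (simp add: prod_dividef)
  finally have e: "real (card ?S) / real q ^ (s*k) = (\<Prod>i\<in>{1..s}. real (card (Sx i)) / real q ^ k)" .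
  have "\<bar>(\<Prod>i\<in>{1..s}. real (card (Sx i)) / real q ^ k) - (\<Prod>i\<in>{1..s}. b i)\<bar>
      \<le> (\<Sum>i\<in>{1..s}. \<bar>real (card (Sx i)) / real q ^ k - b i\<bar>)"
  proof (rule prod_diff_bound)
    show "\<forall>i\<in>{1..s}. 0 \<le> real (card (Sx i)) / real q ^ k \<and> real (card (Sx i)) / real q ^ k \<le> 1 \<and> 0 \<le> b i \<and> b i \<le> 1"
    proof
      fix i assume i: "i \<in> {1..s}"
      have "card (Sx i) \<le> card {..<q^k}" using Sx[OF i] by (intro card_mono) auto
      then have "real (card (Sx i)) \<le> real q ^ k" by (simp flip: of_nat_power)
      then show "0 \<le> real (card (Sx i)) / real q ^ k \<and> real (card (Sx i)) / real q ^ k \<le> 1 \<and> 0 \<le> b i \<and> b i \<le> 1"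
        using b[OF i] q by simp
    qed
  qed simp
  also have "\<dots> \<le> (\<Sum>i\<in>{1..s}. 1 / real q ^ k)" using Sb by (intro sum_mono) auto
  also have "\<dots> = real s / real q ^ k" by simp
  finally have P: "\<bar>real (card ?S) / real q ^ (s*k) - (\<Prod>i\<in>{1..s}. b i)\<bar> \<le> real s / real q ^ k"
    unfolding e .
  show ?thesis using A P by linarith
qed

lemma A1_bound:
  fixes x :: "nat \<Rightarrow> nat \<Rightarrow> real" and cvv :: "nat \<Rightarrow> nat \<Rightarrow> nat \<Rightarrow> nat" and b :: "nat \<Rightarrow> real"
  assumes q: "0 < q"
    and H: "\<And>n. cvv k n \<in> PiE {1..s} (\<lambda>_. {..<q^k})"
    and Hb: "\<And>n i. i \<in> {1..s} \<Longrightarrow> real (cvv k n i) / real q ^ k \<le> x n i \<and> x n i \<le> (real (cvv k n i) + 1) / real q ^ k"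
    and b: "\<And>i. i \<in> {1..s} \<Longrightarrow> 0 \<le> b i \<and> b i \<le> 1"
    and Fb: "\<And>v. v \<in> PiE {1..s} (\<lambda>_. {..<q^k}) \<Longrightarrow>
        \<bar>real (card {n. n < N \<and> cvv k n = v}) / real N - 1 / real q ^ (s*k)\<bar> \<le> \<delta>"
  shows "\<bar>real (card {n. n < N \<and> (\<forall>i\<in>{1..s}. x n i < b i)}) / real N - (\<Prod>i\<in>{1..s}. b i)\<bar>
     \<le> real (q^(s*k)) * \<delta> + real s / real q ^ k"
proof -
  define U where "U = (\<lambda>i. {c. c < q^k \<and> real c < b i * real (q^k)})"
  define L where "L = (\<lambda>i. {c. c < q^k \<and> real c + 1 < b i * real (q^k)})"
  let ?fr = "\<lambda>v. real (card {n. n < N \<and> cvv k n = v}) / real N"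
  have Qp: "0 < real q ^ k" using q by simp
  have sumform: "real (card {n. n < N \<and> cvv k n \<in> PiE {1..s} Sx}) / real N = (\<Sum>v\<in>PiE {1..s} Sx. ?fr v)"
    if "\<And>i. i \<in> {1..s} \<Longrightarrow> Sx i \<subseteq> {..<q^k}" for Sx
  proof -
    have "finite (PiE {1..s} Sx)" using that by (intro finite_PiE) (auto intro: finite_subset)
    then show ?thesis by (simp add: card_fib sum_divide_distrib)
  qed
  have yb: "0 \<le> b i * real (q^k)" "b i * real (q^k) \<le> real (q^k)" if "i \<in> {1..s}" for i
    using b[OF that] by (auto simp: mult_left_le_one_le)
  have yb': "0 \<le> b i * real q ^ k" "b i * real q ^ k \<le> real q ^ k" if "i \<in> {1..s}" for i
    using yb[OF that] by (simp_all add: of_nat_power)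
  have Sb: "\<bar>real (card (Sx i)) / real q ^ k - b i\<bar> \<le> 1 / real q ^ k"
    if "\<bar>real (card (Sx i)) - b i * real (q^k)\<bar> \<le> 1" for Sx i
  proof -
    have "\<bar>real (card (Sx i)) / real q ^ k - b i\<bar> = \<bar>real (card (Sx i)) - b i * real (q^k)\<bar> / real q ^ k"
      using Qp by (simp add: field_simps)
    then show ?thesis using that Qp by (simp add: divide_right_mono)
  qed
  have BU: "\<bar>(\<Sum>v\<in>PiE {1..s} U. ?fr v) - (\<Prod>i\<in>{1..s}. b i)\<bar> \<le> real (q^(s*k)) * \<delta> + real s / real q ^ k"
    by (rule sum_fr_bound[OF q _ _ b Fb]) (auto simp: U_def intro!: Sb cnt_bounds yb yb')
  have BL: "\<bar>(\<Sum>v\<in>PiE {1..s} L. ?fr v) - (\<Prod>i\<in>{1..s}. b i)\<bar> \<le> real (q^(s*k)) * \<delta> + real s / real q ^ k"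
    by (rule sum_fr_bound[OF q _ _ b Fb]) (auto simp: L_def intro!: Sb cnt_bounds yb yb')
  have mem1: "cvv k n \<in> PiE {1..s} U" if xb: "\<forall>i\<in>{1..s}. x n i < b i" for n
  proof -
    show "cvv k n \<in> PiE {1..s} U" unfolding PiE_iff
    proof
      show "\<forall>i\<in>{1..s}. cvv k n i \<in> U i"
      proof
        fix i assume i: "i \<in> {1..s}"
        have "real (cvv k n i) / real q ^ k < b i" using Hb[OF i, of n] xb i by fastforce
        then have "real (cvv k n i) < b i * real (q^k)" using Qp by (simp add: pos_divide_less_eq)
        then show "cvv k n i \<in> U i" using H[of n] i by (auto simp: U_def PiE_iff)
      qed
      show "cvv k n \<in> extensional {1..s}" using H[of n] by (auto simp: PiE_iff)
    qed
  qed
  have sub1: "{n. n < N \<and> (\<forall>i\<in>{1..s}. x n i < b i)} \<subseteq> {n. n < N \<and> cvv k n \<in> PiE {1..s} U}"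
    using mem1 by blast
  have mem2: "x n i < b i" if c: "cvv k n \<in> PiE {1..s} L" and i: "i \<in> {1..s}" for n i
  proof -
    have "real (cvv k n i) + 1 < b i * real (q^k)" using c i by (auto simp: L_def PiE_iff)
    then have "(real (cvv k n i) + 1) / real q ^ k < b i" using Qp by (simp add: pos_divide_less_eq)
    then show "x n i < b i" using Hb[OF i, of n] by linarith
  qed
  have sub2: "{n. n < N \<and> cvv k n \<in> PiE {1..s} L} \<subseteq> {n. n < N \<and> (\<forall>i\<in>{1..s}. x n i < b i)}"
    using mem2 by blast
  have c1: "real (card {n. n < N \<and> (\<forall>i\<in>{1..s}. x n i < b i)}) / real N \<le> (\<Sum>v\<in>PiE {1..s} U. ?fr v)"
  proof -
    have "real (card {n. n < N \<and> (\<forall>i\<in>{1..s}. x n i < b i)}) / real N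
       \<le> real (card {n. n < N \<and> cvv k n \<in> PiE {1..s} U}) / real N"
      using card_mono[OF fin_lt sub1] by (auto intro: divide_right_mono)
    also have "\<dots> = (\<Sum>v\<in>PiE {1..s} U. ?fr v)"
      by (rule sumform) (auto simp: U_def)
    finally show ?thesis .
  qed
  have c2: "(\<Sum>v\<in>PiE {1..s} L. ?fr v) \<le> real (card {n. n < N \<and> (\<forall>i\<in>{1..s}. x n i < b i)}) / real N"
  proof -
    have "(\<Sum>v\<in>PiE {1..s} L. ?fr v) = real (card {n. n < N \<and> cvv k n \<in> PiE {1..s} L}) / real N"
      by (rule sumform[symmetric]) (auto simp: L_def)
    also have "\<dots> \<le> real (card {n. n < N \<and> (\<forall>i\<in>{1..s}. x n i < b i)}) / real N"
      using card_mono[OF fin_lt sub2] by (auto intro: divide_right_mono)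
    finally show ?thesis .
  qed
  show ?thesis using BU BL c1 c2 by (simp add: abs_le_iff)
qed




lemma exists_k:
  assumes q: "2 \<le> q" and r: "0 < (r::real)"
  shows "\<exists>k\<ge>1. real s / real q ^ k < r"
proof -
  define k where "k = Suc (nat \<lceil>real s / r\<rceil>)"
  have k1: "1 \<le> k" unfolding k_def by simp
  have "real s / r \<le> real (nat \<lceil>real s / r\<rceil>)" by linarith
  then have a: "real s / r < real k" unfolding k_def by simp
  have "k < 2 ^ k" by (rule less_exp)
  also have "(2::nat) ^ k \<le> q ^ k" using q by (intro power_mono) auto
  finally have "real k < real q ^ k" by (simp flip: of_nat_power)
  then have "real s / r < real q ^ k" using a by linarith
  then have "real s < r * real q ^ k" using r by (simp add: divide_less_eq mult.commute)
  then have "real s / real q ^ k < r" using q by (simp add: divide_less_eq mult.commute)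
  then show ?thesis using k1 by blast
qed

lemma A1:
  fixes x :: "nat \<Rightarrow> nat \<Rightarrow> real" and cvv :: "nat \<Rightarrow> nat \<Rightarrow> nat \<Rightarrow> nat"
  assumes q: "2 \<le> q"
    and H: "\<And>k n. cvv k n \<in> PiE {1..s} (\<lambda>_. {..<q^k})"
    and Hb: "\<And>k n i. i \<in> {1..s} \<Longrightarrow> real (cvv k n i) / real q ^ k \<le> x n i \<and> x n i \<le> (real (cvv k n i) + 1) / real q ^ k"
    and F: "\<And>k v. 1 \<le> k \<Longrightarrow> v \<in> PiE {1..s} (\<lambda>_. {..<q^k}) \<Longrightarrow>
        (\<lambda>N. real (card {n. n < N \<and> cvv k n = v}) / real N) \<longlonglongrightarrow> 1 / real q ^ (s*k)"
  shows "unif_distr s x"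
  unfolding unif_distr_def
proof (rule LIMSEQ_I)
  fix r :: real assume r: "0 < r"
  have q0: "0 < q" using q by simp
  obtain k where k: "1 \<le> k" "real s / real q ^ k < r / 4" using exists_k[OF q, of "r / 4"] r by auto
  let ?B = "PiE {1..s} (\<lambda>_. {..<q^k})"
  let ?M = "real (q ^ (s*k))"
  define \<delta> where "\<delta> = r / (4 * ?M)"
  have Mp: "0 < ?M" using q0 by simp
  have dp: "0 < \<delta>" unfolding \<delta>_def using r Mp by simp
  have Md: "?M * \<delta> = r / 4" unfolding \<delta>_def using Mp by simp
  have finB: "finite ?B" by (intro finite_PiE) auto
  have "\<forall>v\<in>?B. eventually (\<lambda>N. dist (real (card {n. n < N \<and> cvv k n = v}) / real N) (1 / real q ^ (s*k)) < \<delta>) sequentially"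
    using F[OF k(1)] dp by (auto intro: tendstoD)
  then have "eventually (\<lambda>N. \<forall>v\<in>?B. dist (real (card {n. n < N \<and> cvv k n = v}) / real N) (1 / real q ^ (s*k)) < \<delta>) sequentially"
    by (rule eventually_ball_finite[OF finB])
  then obtain N0 where N0: "\<And>N v. N \<ge> N0 \<Longrightarrow> v \<in> ?B \<Longrightarrow> dist (real (card {n. n < N \<and> cvv k n = v}) / real N) (1 / real q ^ (s*k)) < \<delta>"
    unfolding eventually_sequentially by blast
  show "\<exists>no. \<forall>N\<ge>no. norm (star_discrepancy s x N - 0) < r"
  proof (intro exI allI impI)
    fix N assume N: "N0 \<le> N"
    let ?Bs = "{b::nat\<Rightarrow>real. \<forall>i\<in>{1..s}. 0 \<le> b i \<and> b i \<le> 1}"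
    let ?f = "\<lambda>b. \<bar>real (card {n. n < N \<and> (\<forall>i\<in>{1..s}. x n i < b i)}) / real N - (\<Prod>i\<in>{1..s}. b i)\<bar>"
    have bnd: "?f b \<le> r / 2" if b: "b \<in> ?Bs" for b
    proof -
      have "?f b \<le> ?M * \<delta> + real s / real q ^ k"
      proof (rule A1_bound[OF q0 H Hb])
        show "\<And>i. i \<in> {1..s} \<Longrightarrow> 0 \<le> b i \<and> b i \<le> 1" using b by auto
        show "\<bar>real (card {n. n < N \<and> cvv k n = v}) / real N - 1 / real q ^ (s * k)\<bar> \<le> \<delta>" if "v \<in> ?B" for v
          using N0[OF N that] by (simp add: dist_real_def)
      qed
      then show ?thesis using Md k(2) by linarith
    qed
    have ne: "(\<lambda>_. 0) \<in> ?Bs" by simp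
    have le: "star_discrepancy s x N \<le> r / 2"
      unfolding star_discrepancy_def by (rule cSUP_least) (use ne bnd in auto)
    have bdd: "bdd_above (?f ` ?Bs)" using bnd by (intro bdd_aboveI2[where M = "r / 2"]) blast
    have ge: "0 \<le> star_discrepancy s x N"
      unfolding star_discrepancy_def by (rule cSUP_upper2[OF bdd ne]) simp
    show "norm (star_discrepancy s x N - 0) < r" using le ge r by simp
  qed
qed




lemma cards_sum: "real (card {n. n < (N::nat) \<and> P n}) = (\<Sum>n<N. if P n then 1 else 0)"
proof -
  have "{n. n < N \<and> P n} = {n \<in> {..<N}. P n}" by auto
  then have "real (card {n. n < N \<and> P n}) = (\<Sum>n\<in>{n \<in> {..<N}. P n}. 1)" by simp
  also have "\<dots> = (\<Sum>n<N. if P n then 1 else 0)" by (rule sum.inter_filter) simp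
  finally show ?thesis .
qed

lemma prod_ind: "finite I \<Longrightarrow> (\<Prod>i\<in>I. if P i then 1 else 0 :: real) = (if \<forall>i\<in>I. P i then 1 else 0)"
  by (induction I rule: finite_induct) auto

lemma prod_split_c:
  fixes f g :: "'b \<Rightarrow> real"
  assumes "finite I" "X \<subseteq> I"
  shows "(\<Prod>i\<in>I. if i \<in> X then f i else g i) = (\<Prod>i\<in>X. f i) * (\<Prod>i\<in>I - X. g i)"
proof -
  have "(\<Prod>i\<in>I. if i \<in> X then f i else g i) = (\<Prod>i\<in>I - X. if i \<in> X then f i else g i) * (\<Prod>i\<in>X. if i \<in> X then f i else g i)"
    using assms by (intro prod.subset_diff) auto
  also have "(\<Prod>i\<in>I - X. if i \<in> X then f i else g i) = (\<Prod>i\<in>I - X. g i)" by (intro prod.cong) auto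
  also have "(\<Prod>i\<in>X. if i \<in> X then f i else g i) = (\<Prod>i\<in>X. f i)" by (intro prod.cong) auto
  finally show ?thesis by (simp add: mult.commute)
qed

lemma box_lim:
  fixes x :: "nat \<Rightarrow> nat \<Rightarrow> real" and \<alpha> \<beta> :: "nat \<Rightarrow> real"
  assumes fin: "finite I"
    and A: "\<And>b. (\<forall>i\<in>I. 0 \<le> b i \<and> b i \<le> 1) \<Longrightarrow>
      (\<lambda>N. real (card {n. n < N \<and> (\<forall>i\<in>I. x n i < b i)}) / real N) \<longlonglongrightarrow> (\<Prod>i\<in>I. b i)"
    and ab: "\<forall>i\<in>I. 0 \<le> \<alpha> i \<and> \<alpha> i \<le> \<beta> i \<and> \<beta> i \<le> 1"
  shows "(\<lambda>N. real (card {n. n < N \<and> (\<forall>i\<in>I. \<alpha> i \<le> x n i \<and> x n i < \<beta> i)}) / real N) \<longlonglongrightarrow> (\<Prod>i\<in>I. \<beta> i - \<alpha> i)"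
proof -
  define c where "c = (\<lambda>X i. if i \<in> X then \<alpha> i else \<beta> i)"
  have key: "(if \<forall>i\<in>I. \<alpha> i \<le> x n i \<and> x n i < \<beta> i then 1 else 0 :: real) =
      (\<Sum>X\<in>Pow I. (-1) ^ card X * (if \<forall>i\<in>I. x n i < c X i then 1 else 0))" for n
  proof -
    have "(if \<forall>i\<in>I. \<alpha> i \<le> x n i \<and> x n i < \<beta> i then 1 else 0 :: real) =
        (\<Prod>i\<in>I. (if x n i < \<beta> i then 1 else 0) - (if x n i < \<alpha> i then 1 else 0))"
      unfolding prod_ind[OF fin, symmetric]
      by (intro prod.cong refl) (use ab in auto)
    also have "\<dots> = (\<Sum>X\<in>Pow I. (-1) ^ card X * (\<Prod>i\<in>X. if x n i < \<alpha> i then 1 else 0) * (\<Prod>i\<in>I - X. if x n i < \<beta> i then 1 else 0))"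
      by (rule prod_diff_conv_sum[OF fin])
    also have "\<dots> = (\<Sum>X\<in>Pow I. (-1) ^ card X * (if \<forall>i\<in>I. x n i < c X i then 1 else 0))"
    proof (intro sum.cong refl)
      fix X assume X: "X \<in> Pow I"
      have "(\<Prod>i\<in>X. if x n i < \<alpha> i then 1 else 0) * (\<Prod>i\<in>I - X. if x n i < \<beta> i then 1 else 0)
          = (\<Prod>i\<in>I. if i \<in> X then (if x n i < \<alpha> i then 1 else 0) else (if x n i < \<beta> i then 1 else 0) :: real)"
        using X fin by (intro prod_split_c[symmetric]) auto
      also have "\<dots> = (\<Prod>i\<in>I. if x n i < c X i then 1 else 0)" by (intro prod.cong) (auto simp: c_def)
      also have "\<dots> = (if \<forall>i\<in>I. x n i < c X i then 1 else 0)" by (rule prod_ind[OF fin])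
      finally show "(-1) ^ card X * (\<Prod>i\<in>X. if x n i < \<alpha> i then 1 else 0) * (\<Prod>i\<in>I - X. if x n i < \<beta> i then 1 else 0)
          = (-1) ^ card X * (if \<forall>i\<in>I. x n i < c X i then 1 else 0 :: real)" by simp
    qed
    finally show ?thesis .
  qed
  have eq: "real (card {n. n < N \<and> (\<forall>i\<in>I. \<alpha> i \<le> x n i \<and> x n i < \<beta> i)}) / real N =
      (\<Sum>X\<in>Pow I. (-1) ^ card X * (real (card {n. n < N \<and> (\<forall>i\<in>I. x n i < c X i)}) / real N))" for N
  proof -
    have "real (card {n. n < N \<and> (\<forall>i\<in>I. \<alpha> i \<le> x n i \<and> x n i < \<beta> i)}) =
        (\<Sum>n<N. \<Sum>X\<in>Pow I. (-1) ^ card X * (if \<forall>i\<in>I. x n i < c X i then 1 else 0))"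
      unfolding cards_sum key ..
    also have "\<dots> = (\<Sum>X\<in>Pow I. (-1) ^ card X * (\<Sum>n<N. if \<forall>i\<in>I. x n i < c X i then 1 else 0))"
      by (subst sum.swap) (simp add: sum_distrib_left)
    also have "\<dots> = (\<Sum>X\<in>Pow I. (-1) ^ card X * real (card {n. n < N \<and> (\<forall>i\<in>I. x n i < c X i)}))"
      unfolding cards_sum ..
    finally show ?thesis by (simp add: sum_divide_distrib)
  qed
  have lim: "(\<lambda>N. \<Sum>X\<in>Pow I. (-1) ^ card X * (real (card {n. n < N \<and> (\<forall>i\<in>I. x n i < c X i)}) / real N))
      \<longlonglongrightarrow> (\<Sum>X\<in>Pow I. (-1) ^ card X * (\<Prod>i\<in>I. c X i))"
  proof (intro tendsto_sum tendsto_mult_left A)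
    fix X show "\<forall>i\<in>I. 0 \<le> c X i \<and> c X i \<le> 1" using ab unfolding c_def by force
  qed
  have val: "(\<Sum>X\<in>Pow I. (-1) ^ card X * (\<Prod>i\<in>I. c X i)) = (\<Prod>i\<in>I. \<beta> i - \<alpha> i)"
  proof -
    have "(\<Prod>i\<in>I. \<beta> i - \<alpha> i) = (\<Sum>X\<in>Pow I. (-1) ^ card X * (\<Prod>i\<in>X. \<alpha> i) * (\<Prod>i\<in>I - X. \<beta> i))"
      by (rule prod_diff_conv_sum[OF fin])
    also have "\<dots> = (\<Sum>X\<in>Pow I. (-1) ^ card X * (\<Prod>i\<in>I. c X i))"
      unfolding c_def by (intro sum.cong refl) (use fin in \<open>simp add: prod_split_c mult.assoc\<close>)
    finally show ?thesis by simp
  qed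
  show ?thesis unfolding eq using lim unfolding val .
qed




lemma anchored:
  fixes x :: "nat \<Rightarrow> nat \<Rightarrow> real" and b :: "nat \<Rightarrow> real"
  assumes U: "unif_distr s x" and b: "\<forall>i\<in>{1..s}. 0 \<le> b i \<and> b i \<le> 1"
  shows "(\<lambda>N. real (card {n. n < N \<and> (\<forall>i\<in>{1..s}. x n i < b i)}) / real N) \<longlonglongrightarrow> (\<Prod>i\<in>{1..s}. b i)"
proof -
  let ?Bs = "{b::nat\<Rightarrow>real. \<forall>i\<in>{1..s}. 0 \<le> b i \<and> b i \<le> 1}"
  let ?f = "\<lambda>N b. \<bar>real (card {n. n < N \<and> (\<forall>i\<in>{1..s}. x n i < b i)}) / real N - (\<Prod>i\<in>{1..s}. b i)\<bar>"
  have bnd: "?f N b \<le> 2" if "b \<in> ?Bs" for N b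
  proof -
    have "real (card {n. n < N \<and> (\<forall>i\<in>{1..s}. x n i < b i)}) \<le> real N" using card_le_N by simp
    then have a: "real (card {n. n < N \<and> (\<forall>i\<in>{1..s}. x n i < b i)}) / real N \<le> 1"
      by (cases "N = 0") (auto simp: divide_le_eq)
    have p: "0 \<le> (\<Prod>i\<in>{1..s}. b i)" "(\<Prod>i\<in>{1..s}. b i) \<le> 1" using that by (auto intro: prod_nonneg prod_le_1)
    have z: "0 \<le> real (card {n. n < N \<and> (\<forall>i\<in>{1..s}. x n i < b i)}) / real N" by simp
    show ?thesis unfolding abs_le_iff using a p z by linarith
  qed
  have le: "?f N b \<le> star_discrepancy s x N" for N
    unfolding star_discrepancy_def
    by (rule cSUP_upper) (use b bnd in \<open>auto intro!: bdd_aboveI2[where M = 2]\<close>)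
  have "(\<lambda>N. real (card {n. n < N \<and> (\<forall>i\<in>{1..s}. x n i < b i)}) / real N - (\<Prod>i\<in>{1..s}. b i)) \<longlonglongrightarrow> 0"
    by (rule Lim_null_comparison[where g = "star_discrepancy s x"]) (use le U in \<open>auto simp: unif_distr_def\<close>)
  then show ?thesis by (rule LIM_zero_cancel)
qed

lemma A2:
  fixes x :: "nat \<Rightarrow> nat \<Rightarrow> real" and cvv :: "nat \<Rightarrow> nat \<Rightarrow> nat \<Rightarrow> nat"
  assumes q: "2 \<le> q" and U: "unif_distr s x"
    and H: "\<And>k n. cvv k n \<in> PiE {1..s} (\<lambda>_. {..<q^k})"
    and Hb: "\<And>k n i. i \<in> {1..s} \<Longrightarrow> real (cvv k n i) / real q ^ k \<le> x n i \<and> x n i \<le> (real (cvv k n i) + 1) / real q ^ k"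
    and v0: "v0 \<in> PiE {1..s} (\<lambda>_. {..<q^k})"
  shows "(\<lambda>N. real (card {n. n < N \<and> cvv k n = v0}) / real N) \<longlonglongrightarrow> 1 / real q ^ (s*k)"
proof (rule LIMSEQ_I)
  fix \<epsilon> :: real assume e: "0 < \<epsilon>"
  let ?B = "PiE {1..s} (\<lambda>_. {..<q^k})"
  let ?fr = "\<lambda>v N. real (card {n. n < N \<and> cvv k n = v}) / real N"
  let ?Q = "real q ^ k"
  let ?p = "1 / real q ^ (s*k)"
  define M where "M = q ^ (s*k)"
  have q0: "0 < q" using q by simp
  have Qp: "0 < ?Q" using q0 by simp
  have Q1: "1 / ?Q \<le> 1" using q by (simp add: one_le_power)
  have Mp: "0 < real M" unfolding M_def using q0 by simp
  have M1: "1 \<le> M" unfolding M_def using q0 by simp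
  have pM: "real M * ?p = 1" unfolding M_def using q0 by simp
  have cardB: "card ?B = M" unfolding M_def by (rule card_B)
  have finB: "finite ?B" by (intro finite_PiE) auto
  define \<eta> where "\<eta> = \<epsilon> / (2 * real M)"
  have \<eta>p: "0 < \<eta>" unfolding \<eta>_def using e Mp by simp
  have M\<eta>: "real M * \<eta> = \<epsilon> / 2" unfolding \<eta>_def using Mp by simp
  define \<delta> where "\<delta> = min (1 / ?Q) (\<eta> / (2 * (real s + 1)))"
  have \<delta>p: "0 < \<delta>" unfolding \<delta>_def using \<eta>p Qp by simp
  have \<delta>Q: "\<delta> \<le> 1 / ?Q" unfolding \<delta>_def by simp
  have s\<delta>: "real s * \<delta> \<le> \<eta> / 2"
  proof -
    have "real s * \<delta> \<le> real s * (\<eta> / (2 * (real s + 1)))" unfolding \<delta>_def by (intro mult_left_mono) auto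
    also have "\<dots> \<le> \<eta> / 2" using \<eta>p by (simp add: field_simps)
    finally show ?thesis .
  qed
  have lower: "eventually (\<lambda>N. ?p - \<eta> \<le> ?fr w N) sequentially" if w: "w \<in> ?B" for w
  proof -
    define \<alpha> where "\<alpha> = (\<lambda>i. real (w i) / ?Q + \<delta>)"
    define \<beta> where "\<beta> = (\<lambda>i. (real (w i) + 1) / ?Q)"
    have wi: "real (w i) + 1 \<le> ?Q" if "i \<in> {1..s}" for i
    proof -
      have "w i < q ^ k" using w that by (auto simp: PiE_iff)
      then have "w i + 1 \<le> q ^ k" by simp
      then show ?thesis by (metis of_nat_1 of_nat_add of_nat_le_iff of_nat_power)
    qed
    have ab: "\<forall>i\<in>{1..s}. 0 \<le> \<alpha> i \<and> \<alpha> i \<le> \<beta> i \<and> \<beta> i \<le> 1"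
    proof
      fix i assume i: "i \<in> {1..s}"
      have "\<beta> i = real (w i) / ?Q + 1 / ?Q" unfolding \<beta>_def by (simp add: add_divide_distrib)
      moreover have "\<beta> i \<le> 1" unfolding \<beta>_def using wi[OF i] Qp by simp
      ultimately show "0 \<le> \<alpha> i \<and> \<alpha> i \<le> \<beta> i \<and> \<beta> i \<le> 1" unfolding \<alpha>_def using \<delta>Q \<delta>p Qp by simp
    qed
    have box: "(\<lambda>N. real (card {n. n < N \<and> (\<forall>i\<in>{1..s}. \<alpha> i \<le> x n i \<and> x n i < \<beta> i)}) / real N)
        \<longlonglongrightarrow> (\<Prod>i\<in>{1..s}. \<beta> i - \<alpha> i)"
      by (rule box_lim[OF _ _ ab]) (simp, erule anchored[OF U])
    have vol: "?p - \<eta> / 2 \<le> (\<Prod>i\<in>{1..s}. \<beta> i - \<alpha> i)"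
    proof -
      have ba: "\<beta> i - \<alpha> i = 1 / ?Q - \<delta>" for i unfolding \<alpha>_def \<beta>_def by (simp add: add_divide_distrib)
      have "\<bar>(\<Prod>i\<in>{1..s}. \<beta> i - \<alpha> i) - (\<Prod>i\<in>{1..s}. 1 / ?Q)\<bar> \<le> (\<Sum>i\<in>{1..s}. \<bar>(\<beta> i - \<alpha> i) - 1 / ?Q\<bar>)"
      proof (rule prod_diff_bound)
        have "0 < 1 / ?Q" using Qp by simp
        then have fb: "0 \<le> 1/?Q - \<delta> \<and> 1/?Q - \<delta> \<le> 1 \<and> 0 \<le> 1/?Q \<and> 1/?Q \<le> 1" using \<delta>Q \<delta>p Q1 by linarith
        show "\<forall>i\<in>{1..s}. 0 \<le> \<beta> i - \<alpha> i \<and> \<beta> i - \<alpha> i \<le> 1 \<and> 0 \<le> 1 / ?Q \<and> 1 / ?Q \<le> 1"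
          unfolding ba using fb by blast
      qed simp
      also have "\<dots> = real s * \<delta>" using \<delta>p by (simp add: ba)
      finally have "\<bar>(\<Prod>i\<in>{1..s}. \<beta> i - \<alpha> i) - (\<Prod>i\<in>{1..s}. 1 / ?Q)\<bar> \<le> real s * \<delta>" .
      moreover have "(\<Prod>i\<in>{1..s}. 1 / ?Q) = ?p" by (simp add: power_mult power_divide mult.commute)
      ultimately show ?thesis using s\<delta> by linarith
    qed
    have ev: "eventually (\<lambda>N. dist (real (card {n. n < N \<and> (\<forall>i\<in>{1..s}. \<alpha> i \<le> x n i \<and> x n i < \<beta> i)}) / real N)
        (\<Prod>i\<in>{1..s}. \<beta> i - \<alpha> i) < \<eta> / 2) sequentially"
      by (rule tendstoD[OF box]) (use \<eta>p in simp)
    have sub: "{n. n < N \<and> (\<forall>i\<in>{1..s}. \<alpha> i \<le> x n i \<and> x n i < \<beta> i)} \<subseteq> {n. n < N \<and> cvv k n = w}" for N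
    proof -
      have "cvv k n = w" if bx: "\<forall>i\<in>{1..s}. \<alpha> i \<le> x n i \<and> x n i < \<beta> i" for n
      proof (rule PiE_ext[OF H w])
        fix i assume i: "i \<in> {1..s}"
        have h1: "real (cvv k n i) / ?Q < (real (w i) + 1) / ?Q" using Hb[OF i, of k n] bx i unfolding \<beta>_def by fastforce
        have h2: "real (w i) / ?Q < (real (cvv k n i) + 1) / ?Q"
          using Hb[OF i, of k n] bx i \<delta>p unfolding \<alpha>_def by fastforce
        have "real (cvv k n i) < real (w i) + 1" using h1 Qp q0 by (simp add: divide_less_cancel)
        moreover have "real (w i) < real (cvv k n i) + 1" using h2 Qp q0 by (simp add: divide_less_cancel)
        ultimately show "cvv k n i = w i" by linarith
      qed
      then show ?thesis by blast
    qed
    show ?thesis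
    proof (rule eventually_mono[OF ev])
      fix N assume d: "dist (real (card {n. n < N \<and> (\<forall>i\<in>{1..s}. \<alpha> i \<le> x n i \<and> x n i < \<beta> i)}) / real N)
        (\<Prod>i\<in>{1..s}. \<beta> i - \<alpha> i) < \<eta> / 2"
      have "real (card {n. n < N \<and> (\<forall>i\<in>{1..s}. \<alpha> i \<le> x n i \<and> x n i < \<beta> i)}) / real N \<le> ?fr w N"
        using card_mono[OF fin_lt sub[of N]] by (auto intro: divide_right_mono)
      moreover have "\<bar>real (card {n. n < N \<and> (\<forall>i\<in>{1..s}. \<alpha> i \<le> x n i \<and> x n i < \<beta> i)}) / real N
        - (\<Prod>i\<in>{1..s}. \<beta> i - \<alpha> i)\<bar> < \<eta> / 2" using d by (simp only: dist_real_def)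
      ultimately show "?p - \<eta> \<le> ?fr w N" using vol unfolding abs_less_iff by linarith
    qed
  qed
  have "eventually (\<lambda>N. \<forall>w\<in>?B. ?p - \<eta> \<le> ?fr w N) sequentially"
    by (rule eventually_ball_finite[OF finB]) (use lower in blast)
  moreover have "eventually (\<lambda>N. 1 \<le> N) sequentially" by (rule eventually_ge_at_top)
  ultimately have "eventually (\<lambda>N. (\<forall>w\<in>?B. ?p - \<eta> \<le> ?fr w N) \<and> 1 \<le> N) sequentially"
    by (rule eventually_conj)
  then obtain N0 where N0: "\<And>N. N \<ge> N0 \<Longrightarrow> (\<forall>w\<in>?B. ?p - \<eta> \<le> ?fr w N) \<and> 1 \<le> N"
    unfolding eventually_sequentially by blast
  show "\<exists>no. \<forall>N\<ge>no. norm (?fr v0 N - ?p) < \<epsilon>"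
  proof (intro exI allI impI)
    fix N assume N: "N0 \<le> N"
    have lw: "\<forall>w\<in>?B. ?p - \<eta> \<le> ?fr w N" and N1: "1 \<le> N" using N0[OF N] by auto
    have "(\<Sum>w\<in>?B. card {n. n < N \<and> cvv k n = w}) = card {n. n < N \<and> cvv k n \<in> ?B}"
      by (rule card_fib[OF finB, symmetric])
    also have "{n. n < N \<and> cvv k n \<in> ?B} = {..<N}" using H by blast
    finally have c: "(\<Sum>w\<in>?B. card {n. n < N \<and> cvv k n = w}) = N" by simp
    have "(\<Sum>w\<in>?B. real (card {n. n < N \<and> cvv k n = w})) = real N"
      by (simp only: of_nat_sum[symmetric] c)
    then have s1: "(\<Sum>w\<in>?B. ?fr w N) = 1" using N1 by (simp only: sum_divide_distrib[symmetric]) simp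
    have "(\<Sum>w\<in>?B. ?fr w N) = ?fr v0 N + (\<Sum>w\<in>?B - {v0}. ?fr w N)"
      using finB v0 by (rule sum.remove)
    moreover have "(\<Sum>w\<in>?B - {v0}. ?p - \<eta>) \<le> (\<Sum>w\<in>?B - {v0}. ?fr w N)" using lw by (intro sum_mono) auto
    moreover have "(\<Sum>w\<in>?B - {v0}. ?p - \<eta>) = (real M - 1) * (?p - \<eta>)"
    proof -
      have "card (?B - {v0}) = M - 1" using v0 cardB by (simp add: card_Diff_singleton)
      then have "real (card (?B - {v0})) = real M - 1" using M1 by (simp add: of_nat_diff)
      then show ?thesis by (simp only: sum_constant)
    qed
    ultimately have up: "?fr v0 N \<le> 1 - (real M - 1) * (?p - \<eta>)" using s1 by linarith
    have "(real M - 1) * (?p - \<eta>) = real M * ?p - ?p - (real M - 1) * \<eta>" by (simp only: algebra_simps)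
    then have "1 - (real M - 1) * (?p - \<eta>) = ?p + (real M - 1) * \<eta>" using pM by linarith
    then have up2: "?fr v0 N - ?p \<le> (real M - 1) * \<eta>" using up by linarith
    have lo: "?p - \<eta> \<le> ?fr v0 N" using lw v0 by blast
    have "(real M - 1) * \<eta> = real M * \<eta> - \<eta>" by (simp add: algebra_simps)
    then have "(real M - 1) * \<eta> < \<epsilon>" using M\<eta> \<eta>p e by linarith
    moreover have "\<eta> < \<epsilon>"
    proof -
      have "real M \<ge> 1" using M1 by simp
      then have "\<eta> \<le> real M * \<eta>" using \<eta>p by (simp add: mult_le_cancel_right1)
      then show ?thesis using M\<eta> e by linarith
    qed
    ultimately show "norm (?fr v0 N - ?p) < \<epsilon>" unfolding real_norm_def abs_less_iff using up2 lo by linarith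
  qed
qed




lemma card_Cs:
  assumes q: "0 < q" and K: "K \<le> m" and a: "a < q ^ K"
  shows "card {c. c < q ^ m \<and> c mod q ^ K = a} = q ^ (m - K)"
proof -
  have qm: "q ^ m = q ^ K * q ^ (m - K)" using K by (simp flip: power_add)
  have "{c. c < q ^ m \<and> c mod q ^ K = a} = (\<lambda>t. a + q ^ K * t) ` {..<q ^ (m - K)}"
  proof (intro set_eqI iffI)
    fix c assume c: "c \<in> {c. c < q ^ m \<and> c mod q ^ K = a}"
    have cm: "c mod q ^ K = a" and cl: "c < q ^ m" using c by auto
    have "c = a + q ^ K * (c div q ^ K)" using mod_mult_div_eq[of c "q ^ K"] cm by simp
    moreover have "c div q ^ K < q ^ (m - K)"
      by (rule less_mult_imp_div_less) (use cl qm in \<open>simp add: mult.commute\<close>)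
    ultimately show "c \<in> (\<lambda>t. a + q ^ K * t) ` {..<q ^ (m - K)}" by blast
  next
    fix c assume "c \<in> (\<lambda>t. a + q ^ K * t) ` {..<q ^ (m - K)}"
    then obtain t where t: "t < q ^ (m - K)" and c: "c = a + q ^ K * t" by auto
    have "a + q ^ K * t < q ^ K + q ^ K * t" using a by simp
    also have "\<dots> = q ^ K * (t + 1)" by (simp add: algebra_simps)
    also have "\<dots> \<le> q ^ K * q ^ (m - K)" using t by (intro mult_le_mono2) simp
    finally have "c < q ^ m" using c qm by simp
    moreover have "c mod q ^ K = a" using c a by simp
    ultimately show "c \<in> {c. c < q ^ m \<and> c mod q ^ K = a}" by simp
  qed
  moreover have "inj_on (\<lambda>t. a + q ^ K * t) {..<q ^ (m - K)}" using q by (intro inj_onI) simp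
  ultimately show ?thesis using card_image[of "\<lambda>t. a + q ^ K * t" "{..<q ^ (m - K)}"] by simp
qed

lemma coarse:
  assumes q: "0 < q" and sq: "\<forall>n r. sq n r < q" and K: "K \<le> m" and a: "a < q ^ K"
    and F: "\<And>c. c < q ^ m \<Longrightarrow> (\<lambda>N. real (card {n. n < N \<and> qadic_trunc q m (sq n) = c}) / real N) \<longlonglongrightarrow> 1 / real q ^ m"
  shows "(\<lambda>N. real (card {n. n < N \<and> qadic_trunc q K (sq n) mod q ^ K = a mod q ^ K}) / real N) \<longlonglongrightarrow> 1 / real q ^ K"
proof -
  let ?Cs = "{c. c < q ^ m \<and> c mod q ^ K = a}"
  have finC: "finite ?Cs" by simp
  have set: "{n. n < N \<and> qadic_trunc q K (sq n) mod q ^ K = a mod q ^ K} = {n. n < N \<and> qadic_trunc q m (sq n) \<in> ?Cs}" for N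
  proof -
    have "qadic_trunc q K (sq n) mod q ^ K = a mod q ^ K \<longleftrightarrow> qadic_trunc q m (sq n) \<in> ?Cs" for n
    proof -
      have d: "\<forall>r<m. sq n r < q" "\<forall>r<K. sq n r < q" using sq by auto
      have "qadic_trunc q K (sq n) mod q ^ K = qadic_trunc q K (sq n)" using trunc_lt[OF q d(2)] by simp
      moreover have "qadic_trunc q K (sq n) = qadic_trunc q m (sq n) mod q ^ K" by (rule trunc_mod[OF q K d(1)])
      moreover have "qadic_trunc q m (sq n) < q ^ m" by (rule trunc_lt[OF q d(1)])
      ultimately show ?thesis using a by auto
    qed
    then show ?thesis by blast
  qed
  have eq: "real (card {n. n < N \<and> qadic_trunc q K (sq n) mod q ^ K = a mod q ^ K}) / real N =
     (\<Sum>c\<in>?Cs. real (card {n. n < N \<and> qadic_trunc q m (sq n) = c}) / real N)" for N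
    unfolding set card_fib[OF finC] by (simp add: sum_divide_distrib)
  have lim: "(\<lambda>N. \<Sum>c\<in>?Cs. real (card {n. n < N \<and> qadic_trunc q m (sq n) = c}) / real N) \<longlonglongrightarrow> (\<Sum>c\<in>?Cs. 1 / real q ^ m)"
    by (intro tendsto_sum F) simp
  have v1: "(\<Sum>c\<in>?Cs. 1 / real q ^ m) = real (q ^ (m - K)) / real q ^ m"
    using card_Cs[OF q K a] by simp
  have v2: "real (q ^ (m - K)) / real q ^ m = 1 / real q ^ K"
  proof -
    have "real q ^ m = real q ^ K * real q ^ (m - K)" using K by (simp flip: power_add)
    moreover have "real (q ^ (m - K)) = real q ^ (m - K)" by (rule of_nat_power)
    ultimately show ?thesis using q by simp
  qed
  show ?thesis unfolding eq using lim unfolding v1 v2 .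
qed




lemma card_field_ge2: "2 \<le> CARD('a::{field,finite})"
proof -
  have "card {0::'a, 1} = 2" by simp
  moreover have "card {0::'a, 1} \<le> CARD('a)" by (rule card_mono) auto
  ultimately show ?thesis by simp
qed

theorem theorem2:
  fixes C :: "nat \<Rightarrow> nat \<Rightarrow> nat \<Rightarrow> 'a::{field,finite}"
    and s :: nat
    and sq :: "nat \<Rightarrow> nat \<Rightarrow> nat"
  assumes "s \<ge> 1"
    and "finite_row s C"
    and "optimal_row_lengths s C"
    and "\<exists>(\<psi>1 :: nat \<Rightarrow> nat \<Rightarrow> 'a) lam1. psi_bij CARD('a) \<psi>1 \<and> lambda_bij CARD('a) s lam1 \<and>
           (\<exists>r0. \<forall>r\<ge>r0. \<psi>1 r 0 = 0) \<and>
           is_Ts_sequence CARD('a) (\<lambda>_. 0) s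
             (\<lambda>n. alg_point CARD('a) C \<psi>1 lam1 (qdigits CARD('a) n))
             (\<lambda>m n. alg_trunc CARD('a) C \<psi>1 lam1 m (qdigits CARD('a) n))"
    and "\<forall>n r. sq n r < CARD('a)"
  shows "\<forall>(\<psi> :: nat \<Rightarrow> nat \<Rightarrow> 'a) lam. psi_bij CARD('a) \<psi> \<and> lambda_bij CARD('a) s lam \<longrightarrow>
           (unif_distr s (\<lambda>n. alg_point CARD('a) C \<psi> lam (sq n)) \<longleftrightarrow> qadic_ud CARD('a) sq)"
proof (intro allI impI)
  fix \<psi> :: "nat \<Rightarrow> nat \<Rightarrow> 'a" and lam :: "nat \<Rightarrow> nat \<Rightarrow> 'a \<Rightarrow> nat"
  assume bl: "psi_bij CARD('a) \<psi> \<and> lambda_bij CARD('a) s lam"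
  let ?q = "CARD('a)"
  have s: "1 \<le> s" using assms(1) .
  have opt: "optimal_row_lengths s C" using assms(3) .
  have sqb: "\<forall>n r. sq n r < ?q" using assms(5) .
  have q2: "2 \<le> ?q" by (rule card_field_ge2)
  have q0: "0 < ?q" using q2 by simp
  have pb: "psi_bij ?q \<psi>" and lb: "lambda_bij ?q s lam" using bl by auto
  obtain \<psi>1 :: "nat \<Rightarrow> nat \<Rightarrow> 'a" and lam1 where pb1: "psi_bij ?q \<psi>1" and lb1: "lambda_bij ?q s lam1"
    and ts: "is_Ts_sequence ?q (\<lambda>_. 0) s
             (\<lambda>n. alg_point ?q C \<psi>1 lam1 (qdigits ?q n))
             (\<lambda>m n. alg_trunc ?q C \<psi>1 lam1 m (qdigits ?q n))"
    using assms(4) by blast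
  define cvv where "cvv = (\<lambda>k n. CV ?q s k C \<psi> lam (sq n))"
  define x where "x = (\<lambda>n. alg_point ?q C \<psi> lam (sq n))"
  have H: "cvv k n \<in> PiE {1..s} (\<lambda>_. {..<?q^k})" for k n
    unfolding cvv_def by (rule CV_in[OF q0 lb])
  have Hb: "real (cvv k n i) / real ?q ^ k \<le> x n i \<and> x n i \<le> (real (cvv k n i) + 1) / real ?q ^ k"
    if i: "i \<in> {1..s}" for k n i
  proof -
    have d: "\<forall>j\<ge>1. alg_digit C \<psi> lam (sq n) i j < ?q" using dig_lt[OF lb i] by blast
    show ?thesis unfolding cvv_def x_def CV_app[OF i] alg_point_def by (rule point_bounds[OF q0 d])
  qed
  have Gk: "\<exists>G. bij_betw G (PiE {1..s} (\<lambda>_. {..<?q^k})) {..<?q^(s*k)} \<and>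
     (\<forall>n. qadic_trunc ?q (s*k) (sq n) = G (cvv k n))" if k: "1 \<le> k" for k
  proof -
    have inj1: "inj_on (CV ?q s k C \<psi>1 lam1) (PiE {..<s*k} (\<lambda>_. {..<?q}))"
      by (rule CV1_inj[OF q0 s k opt lb1 ts])
    have bij: "bij_betw (CV ?q s k C \<psi> lam) (PiE {..<s*k} (\<lambda>_. {..<?q})) (PiE {1..s} (\<lambda>_. {..<?q^k}))"
      by (rule CV_bij[OF q0 opt pb lb pb1 lb1 inj1])
    show ?thesis unfolding cvv_def by (rule G_exists[OF q0 opt bij sqb])
  qed
  have seteq: "{n. n < N \<and> cvv k n = v} = {n. n < N \<and> qadic_trunc ?q (s*k) (sq n) = G v}"
    if G: "bij_betw G (PiE {1..s} (\<lambda>_. {..<?q^k})) {..<?q^(s*k)}"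
      and Ge: "\<forall>n. qadic_trunc ?q (s*k) (sq n) = G (cvv k n)"
      and v: "v \<in> PiE {1..s} (\<lambda>_. {..<?q^k})" for k v G N
  proof -
    have ij: "inj_on G (PiE {1..s} (\<lambda>_. {..<?q^k}))" using G by (simp add: bij_betw_def)
    have "cvv k n = v \<longleftrightarrow> G (cvv k n) = G v" for n
      using inj_onD[OF ij _ H[of k n] v] by blast
    then show ?thesis using Ge by auto
  qed
  show "unif_distr s (\<lambda>n. alg_point ?q C \<psi> lam (sq n)) \<longleftrightarrow> qadic_ud ?q sq"
  proof
    assume U: "unif_distr s (\<lambda>n. alg_point ?q C \<psi> lam (sq n))"
    then have U': "unif_distr s x" unfolding x_def .
    show "qadic_ud ?q sq" unfolding qadic_ud_def
    proof (intro allI impI)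
      fix K a assume K: "1 \<le> K" and a: "a < ?q ^ K"
      obtain G where G: "bij_betw G (PiE {1..s} (\<lambda>_. {..<?q^K})) {..<?q^(s*K)}"
        and Ge: "\<forall>n. qadic_trunc ?q (s*K) (sq n) = G (cvv K n)" using Gk[OF K] by blast
      have Km: "K \<le> s * K" using s by simp
      show "(\<lambda>N. real (card {n. n < N \<and> qadic_trunc ?q K (sq n) mod ?q ^ K = a mod ?q ^ K}) / real N) \<longlonglongrightarrow> 1 / real ?q ^ K"
      proof (rule coarse[OF q0 sqb Km a])
        fix c assume c: "c < ?q ^ (s*K)"
        define v where "v = inv_into (PiE {1..s} (\<lambda>_. {..<?q^K})) G c"
        have v: "v \<in> PiE {1..s} (\<lambda>_. {..<?q^K})" and Gv: "G v = c"
        proof -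
          have im: "c \<in> G ` PiE {1..s} (\<lambda>_. {..<?q^K})" using G c by (simp add: bij_betw_def)
          show "v \<in> PiE {1..s} (\<lambda>_. {..<?q^K})" unfolding v_def by (rule inv_into_into[OF im])
          show "G v = c" unfolding v_def by (rule f_inv_into_f[OF im])
        qed
        have "(\<lambda>N. real (card {n. n < N \<and> cvv K n = v}) / real N) \<longlonglongrightarrow> 1 / real ?q ^ (s*K)"
          by (rule A2[OF q2 U' H Hb v])
        then show "(\<lambda>N. real (card {n. n < N \<and> qadic_trunc ?q (s*K) (sq n) = c}) / real N) \<longlonglongrightarrow> 1 / real ?q ^ (s*K)"
          unfolding seteq[OF G Ge v] Gv .
      qed
    qed
  next
    assume Q: "qadic_ud ?q sq"
    have "unif_distr s x"
    proof (rule A1[OF q2 H Hb])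
      fix k v assume k: "1 \<le> k" and v: "v \<in> PiE {1..s} (\<lambda>_. {..<?q^k})"
      obtain G where G: "bij_betw G (PiE {1..s} (\<lambda>_. {..<?q^k})) {..<?q^(s*k)}"
        and Ge: "\<forall>n. qadic_trunc ?q (s*k) (sq n) = G (cvv k n)" using Gk[OF k] by blast
      have Gv: "G v < ?q ^ (s*k)" using bij_betwE[OF G] v by blast
      have sk: "1 \<le> s * k" using s k by simp
      have lim: "(\<lambda>N. real (card {n. n < N \<and> qadic_trunc ?q (s*k) (sq n) mod ?q ^ (s*k) = G v mod ?q ^ (s*k)}) / real N)
          \<longlonglongrightarrow> 1 / real ?q ^ (s*k)"
      proof -
        have "\<forall>k\<ge>1. \<forall>a<?q ^ k. (\<lambda>N. real (card {n. n < N \<and> qadic_trunc ?q k (sq n) mod ?q ^ k = a mod ?q ^ k}) / real N)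
           \<longlonglongrightarrow> 1 / real ?q ^ k" using Q unfolding qadic_ud_def .
        then show ?thesis using sk Gv by blast
      qed
      have md: "qadic_trunc ?q (s*k) (sq n) mod ?q ^ (s*k) = qadic_trunc ?q (s*k) (sq n)" for n
        using trunc_lt[OF q0, of "s*k" "sq n"] sqb by simp
      show "(\<lambda>N. real (card {n. n < N \<and> cvv k n = v}) / real N) \<longlonglongrightarrow> 1 / real ?q ^ (s*k)"
        unfolding seteq[OF G Ge v] using lim unfolding md mod_less[OF Gv] .
    qed
    then show "unif_distr s (\<lambda>n. alg_point ?q C \<psi> lam (sq n))" unfolding x_def .
  qed
qed


end
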